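(* For every integer $l\ge 1$, let $\mathcal{I}_6(l)$ be the index coding instance on $[4l+1]$ with side-information sets $A_{2i-1}=\{2j: j\in[2l]\setminus\{i\}\}\cup\{4l+1\}$ and $A_{2i}=\{2i-1\}$ for $i\in[2l]$, and $A_{4l+1}=\{2i-1: i\in[2l]\}$. Then $$\beta_{\text{R}}(\mathcal{I}_6(l))-\beta_{\text{UMCD}}(\mathcal{I}_6(l))=l-\tfrac{1}{2}.$$
   Context: An index coding instance consists of a positive integer $m$ and sets $A_i\subseteq[m]\setminus\{i\}$, $i\in[m]$; $B_i=[m]\setminus(A_i\cup\{i\})$. For a $0/1$ matrix $\boldsymbol{G}$ with columns indexed by $[m]$, $\boldsymbol{G}_{[k]}^{L}$ is the submatrix of its first $k$ rows and columns in $L$, and $\mathrm{mcm}(\boldsymbol{G})$ is the maximum number of $1$-entries no two in the same row or column (0 if there are no columns). UMCD algorithm: $N=[m]$, $k=0$; while $N\ne\emptyset$: $k\leftarrow k+1$; pick $w\in N$ minimizing $|A_w|$ over $N$ (arbitrary tie-breaking); set row $k$ of $\boldsymbol{G}$ to the indicator vector of $\{w\}\cup A_w$; remove $w$ from $N$; remove from $N$ every $i$ with $\mathrm{mcm}(\boldsymbol{G}_{[k]}^{\{i\}\cup B_i})=\mathrm{mcm}(\boldsymbol{G}_{[k]}^{B_i})+1$. Output $\beta_{\text{UMCD}}=k$ (the value is claimed for the executions of the algorithm). Recursive scheme: set $\beta_{\text{R}}(\{i\})=1$ for all $i$, and for $M\subseteq[m]$ with $|M|\ge2$ define recursively $$\beta_{\text{R}}(M)=\min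 \max_{i\in M}\sum_{j\in[n]:\,M_j\not\subseteq A_i}\gamma_j\,\beta_{\text{R}}(M_j),$$ the minimum being over finite families of nonempty proper subsets $M_1,\dots,M_n\subsetneq M$ and weights $\gamma_j\in[0,1]$ with $\sum_{j:\,i\in M_j}\gamma_j\ge1$ for all $i\in M$. Finally $\beta_{\text{R}}(\mathcal{I})=\beta_{\text{R}}([m])$. *)

theory Defs
  imports Complex_Main
begin

(* Index coding instance on [m] = {1..m}: side-information map A :: nat => nat set. *)

definition B_set :: "nat \<Rightarrow> (nat \<Rightarrow> nat set) \<Rightarrow> nat \<Rightarrow> nat set" where
  "B_set m A i = {1..m} - (A i \<union> {i})"

(* A 0/1 matrix with columns indexed by [m] is represented by the list of its rows,
   each row given as the set of columns carrying a 1.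
   mcm G L = maximum matching size in the submatrix of all rows of G and columns L. *)
definition mcm :: "nat set list \<Rightarrow> nat set \<Rightarrow> nat" where
  "mcm G L = Max {card E | E. E \<subseteq> {(r, c). r < length G \<and> c \<in> L \<and> c \<in> G ! r}
                              \<and> inj_on fst E \<and> inj_on snd E}"

(* One iteration of the UMCD algorithm; state = (N, rows of G so far). *)
definition umcd_step :: "nat \<Rightarrow> (nat \<Rightarrow> nat set) \<Rightarrow> nat set \<times> nat set list \<Rightarrow> nat set \<times> nat set list \<Rightarrow> bool" where
  "umcd_step m A s s' \<longleftrightarrow>
     (\<exists>N G w. s = (N, G) \<and> N \<noteq> {} \<and> w \<in> N \<and> (\<forall>v\<in>N. card (A w) \<le> card (A v)) \<and>
        (let G' = G @ [insert w (A w)]; N1 = N - {w} in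
          s' = (N1 - {i \<in> N1. mcm G' ({i} \<union> B_set m A i) = mcm G' (B_set m A i) + 1}, G')))"

(* G is the final matrix of some terminating execution of UMCD (any tie-breaking);
   beta_UMCD of that execution is length G. *)
definition umcd_run :: "nat \<Rightarrow> (nat \<Rightarrow> nat set) \<Rightarrow> nat set list \<Rightarrow> bool" where
  "umcd_run m A G \<longleftrightarrow> (umcd_step m A)\<^sup>*\<^sup>* ({1..m}, []) ({}, G)"

(* Recursive scheme with fuel n; the intended value is betaR A M = betaR_aux A (card M) M.
   A family M_1..M_n with weights gamma_j is a list of pairs (M_j, gamma_j). *)
primrec betaR_aux :: "(nat \<Rightarrow> nat set) \<Rightarrow> nat \<Rightarrow> nat set \<Rightarrow> real" where
  "betaR_aux A 0 M = 1"
| "betaR_aux A (Suc n) M =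
     (if card M \<le> 1 then 1 else
      Inf { Max ((\<lambda>i. \<Sum>j<length F. if fst (F ! j) \<subseteq> A i then 0
                                   else snd (F ! j) * betaR_aux A n (fst (F ! j))) ` M)
          | F :: (nat set \<times> real) list.
             (\<forall>j<length F. fst (F ! j) \<noteq> {} \<and> fst (F ! j) \<subset> M \<and> 0 \<le> snd (F ! j) \<and> snd (F ! j) \<le> 1)
           \<and> (\<forall>i\<in>M. (\<Sum>j | j < length F \<and> i \<in> fst (F ! j). snd (F ! j)) \<ge> 1) })"

definition betaR :: "(nat \<Rightarrow> nat set) \<Rightarrow> nat set \<Rightarrow> real" where
  "betaR A M = betaR_aux A (card M) M"

definition I6 :: "nat \<Rightarrow> nat \<Rightarrow> nat set" where
  "I6 l x =
     (if x = 4 * l + 1 then {2 * i - 1 | i. i \<in> {1..2 * l}}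
      else if odd x then {2 * j | j. j \<in> {1..2 * l} \<and> j \<noteq> (x + 1) div 2} \<union> {4 * l + 1}
      else {x - 1})"

end

theory Submission
  imports Defs
begin


definition validF :: "nat set \<Rightarrow> (nat set \<times> real) list \<Rightarrow> bool" where
 "validF M F \<longleftrightarrow> (\<forall>j<length F. fst (F ! j) \<noteq> {} \<and> fst (F ! j) \<subset> M \<and> 0 \<le> snd (F ! j) \<and> snd (F ! j) \<le> 1)
           \<and> (\<forall>i\<in>M. (\<Sum>j | j < length F \<and> i \<in> fst (F ! j). snd (F ! j)) \<ge> 1)"

definition sumi :: "(nat \<Rightarrow> nat set) \<Rightarrow> nat \<Rightarrow> (nat set \<times> real) list \<Rightarrow> nat \<Rightarrow> real" where
 "sumi A n F i = (\<Sum>j<length F. if fst (F ! j) \<subseteq> A i then 0 else snd (F ! j) * betaR_aux A n (fst (F ! j)))"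

lemma betaR_Suc: "betaR_aux A (Suc n) M = (if card M \<le> 1 then 1 else Inf {Max (sumi A n F ` M) | F. validF M F})"
  by (simp add: sumi_def validF_def)

declare betaR_aux.simps(2)[simp del]

lemma betaR_single[simp]: "betaR_aux A n {x} = 1"
  by (cases n) (auto simp: betaR_Suc)

lemma singleton_family:
  assumes fin: "finite M" and c2: "2 \<le> card M"
  defines "F \<equiv> map (\<lambda>x. ({x}, 1::real)) (sorted_list_of_set M)"
  shows "validF M F" and "\<And>i. sumi A n F i = real (card (M - A i))"
proof -
  let ?xs = "sorted_list_of_set M"
  have d: "distinct ?xs" and s: "set ?xs = M" using fin by auto
  have len: "length F = length ?xs" by (simp add: F_def)
  have Fj: "\<And>j. j < length ?xs \<Longrightarrow> F ! j = ({?xs ! j}, 1)" by (simp add: F_def)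
  show "validF M F"
    unfolding validF_def
  proof (intro conjI allI impI ballI)
    fix j assume j: "j < length F"
    then have "?xs ! j \<in> M" using s len nth_mem by fastforce
    moreover have "M \<noteq> {?xs ! j}"
    proof
      assume "M = {?xs ! j}" then obtain a where "M = {a}" by blast
      then have "card M = 1" by simp
      with c2 show False by simp
    qed
    ultimately show "fst (F ! j) \<noteq> {}" "fst (F ! j) \<subset> M" "0 \<le> snd (F ! j)" "snd (F ! j) \<le> 1"
      using Fj j len by auto
  next
    fix i assume i: "i \<in> M"
    then obtain k where k: "k < length ?xs" "?xs ! k = i" using s by (metis in_set_conv_nth)
    have "{j. j < length F \<and> i \<in> fst (F ! j)} = {j. j < length ?xs \<and> ?xs ! j = i}"
      using Fj len by auto
    also have "\<dots> = {k}"
    proof (intro set_eqI iffI)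
      fix j assume "j \<in> {j. j < length ?xs \<and> ?xs ! j = i}"
      then have "j < length ?xs" "?xs ! j = ?xs ! k" using k by auto
      then show "j \<in> {k}" using nth_eq_iff_index_eq[OF d _ k(1)] by simp
    qed (use k in auto)
    finally have eq: "{j. j < length F \<and> i \<in> fst (F ! j)} = {k}" .
    then show "(\<Sum>j | j < length F \<and> i \<in> fst (F ! j). snd (F ! j)) \<ge> 1"
      using k Fj by (simp only: eq) simp
  qed
  fix i
  have "sumi A n F i = (\<Sum>j<length ?xs. (\<lambda>x. if x \<in> A i then 0 else 1::real) (?xs ! j))"
    unfolding sumi_def len by (intro sum.cong) (auto simp: Fj)
  also have "\<dots> = sum_list (map (\<lambda>x. if x \<in> A i then 0 else 1::real) ?xs)"
    by (simp add: sum_list_sum_nth atLeast0LessThan)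
  also have "\<dots> = (\<Sum>x\<in>M. if x \<in> A i then 0 else 1::real)"
    using d s by (simp add: sum_list_distinct_conv_sum_set)
  also have "\<dots> = real (card (M - A i))"
  proof -
    have "(\<Sum>x\<in>M. if x \<in> A i then 0 else 1::real) = (\<Sum>x\<in>M - A i. 1)"
      using fin by (simp add: sum.If_cases Diff_eq)
    then show ?thesis by simp
  qed
  finally show "sumi A n F i = real (card (M - A i))" .
qed

lemma betaR_nonneg: "0 \<le> betaR_aux A n M"
proof (induction n arbitrary: M)
  case 0 then show ?case by simp
next
  case (Suc n)
  show ?case
  proof (cases "card M \<le> 1")
    case True then show ?thesis by (simp add: betaR_Suc)
  next
    case False
    then have fin: "finite M" and c2: "2 \<le> card M" using card.infinite by fastforce+
    have ne: "M \<noteq> {}" using fin c2 by auto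
    obtain F where vF: "validF M F" using singleton_family[OF fin c2] by blast
    have "0 \<le> Inf {Max (sumi A n F ` M) | F. validF M F}"
    proof (rule cInf_greatest)
      show "{Max (sumi A n F ` M) | F. validF M F} \<noteq> {}" using vF by blast
    next
      fix x assume "x \<in> {Max (sumi A n F ` M) | F. validF M F}"
      then obtain F' where x: "x = Max (sumi A n F' ` M)" and v: "validF M F'" by blast
      obtain i where i: "i \<in> M" using ne by blast
      have "0 \<le> sumi A n F' i" unfolding sumi_def
        using v Suc.IH by (intro sum_nonneg) (auto simp: validF_def)
      also have "\<dots> \<le> x" unfolding x using fin i by (intro Max_ge) auto
      finally show "0 \<le> x" .
    qed
    then show ?thesis using False by (simp add: betaR_Suc)
  qed
qed

lemma sumi_nonneg: "validF M F \<Longrightarrow> 0 \<le> sumi A n F i"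
  unfolding sumi_def using betaR_nonneg
  by (intro sum_nonneg) (auto simp: validF_def)

lemma betaR_upper:
  assumes fin: "finite M" and c2: "2 \<le> card M" and v: "validF M F"
    and b: "\<And>i. i \<in> M \<Longrightarrow> sumi A n F i \<le> c"
  shows "betaR_aux A (Suc n) M \<le> c"
proof -
  have ne: "M \<noteq> {}" using fin c2 by auto
  have "Inf {Max (sumi A n F ` M) | F. validF M F} \<le> Max (sumi A n F ` M)"
  proof (rule cInf_lower)
    show "Max (sumi A n F ` M) \<in> {Max (sumi A n F ` M) | F. validF M F}" using v by blast
    show "bdd_below {Max (sumi A n F ` M) | F. validF M F}"
    proof (rule bdd_belowI)
      fix x assume "x \<in> {Max (sumi A n F ` M) | F. validF M F}"
      then obtain F' where x: "x = Max (sumi A n F' ` M)" and v': "validF M F'" by blast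
      obtain i where i: "i \<in> M" using ne by blast
      have "0 \<le> sumi A n F' i" using sumi_nonneg[OF v'] .
      also have "\<dots> \<le> x" unfolding x using fin i by (intro Max_ge) auto
      finally show "0 \<le> x" .
    qed
  qed
  also have "\<dots> \<le> c" using fin ne b by (subst Max_le_iff) auto
  finally show ?thesis using c2 by (simp add: betaR_Suc)
qed

lemma betaR_upper_single:
  assumes fin: "finite M" and c2: "2 \<le> card M" and b: "\<And>i. i \<in> M \<Longrightarrow> card (M - A i) \<le> k"
  shows "betaR_aux A (Suc n) M \<le> k"
  using singleton_family[OF fin c2] b
  by (intro betaR_upper[OF fin c2]) (auto)

lemma lower_frame:
  fixes g :: "nat set \<Rightarrow> real"
  assumes small: "\<And>T. card T \<le> 1 \<Longrightarrow> T \<subseteq> U \<Longrightarrow> g T \<le> 1"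
    and step: "\<And>n S T F. finite S \<Longrightarrow> S \<subseteq> U \<Longrightarrow> 2 \<le> card S \<Longrightarrow> card S \<le> Suc n \<Longrightarrow> T \<subseteq> S
       \<Longrightarrow> validF S F \<Longrightarrow> (\<forall>j<length F. \<forall>V \<subseteq> fst (F ! j). g V \<le> betaR_aux A n (fst (F ! j)))
       \<Longrightarrow> \<exists>i\<in>S. g T \<le> sumi A n F i"
  shows "finite S \<Longrightarrow> S \<subseteq> U \<Longrightarrow> card S \<le> n \<Longrightarrow> T \<subseteq> S \<Longrightarrow> g T \<le> betaR_aux A n S"
proof (induction n arbitrary: S T)
  case 0
  then have "T = {}" by auto
  then show ?case using small[of "{}"] by simp
next
  case (Suc n)
  show ?case
  proof (cases "card S \<le> 1")
    case True
    then have "card T \<le> 1" using Suc.prems card_mono by (metis le_trans)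
    then show ?thesis using True small Suc.prems by (simp add: betaR_Suc)
  next
    case False
    then have c2: "2 \<le> card S" by simp
    have ne: "S \<noteq> {}" using c2 by auto
    obtain F0 where vF: "validF S F0" using singleton_family[OF Suc.prems(1) c2] by blast
    have "g T \<le> Inf {Max (sumi A n F ` S) | F. validF S F}"
    proof (rule cInf_greatest)
      show "{Max (sumi A n F ` S) | F. validF S F} \<noteq> {}" using vF by blast
    next
      fix x assume "x \<in> {Max (sumi A n F ` S) | F. validF S F}"
      then obtain F where x: "x = Max (sumi A n F ` S)" and v: "validF S F" by blast
      have IH: "\<forall>j<length F. \<forall>V \<subseteq> fst (F ! j). g V \<le> betaR_aux A n (fst (F ! j))"
      proof (intro allI impI)
        fix j V assume j: "j < length F" and V: "V \<subseteq> fst (F ! j)"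
        have sub: "fst (F ! j) \<subset> S" using v j by (auto simp: validF_def)
        have "card (fst (F ! j)) < card S" using psubset_card_mono[OF Suc.prems(1) sub] .
        have fj: "finite (fst (F ! j))" using sub Suc.prems(1) finite_subset by blast
        have uj: "fst (F ! j) \<subseteq> U" using sub Suc.prems(2) by blast
        have cj: "card (fst (F ! j)) \<le> n" using \<open>card (fst (F ! j)) < card S\<close> Suc.prems(3) by linarith
        show "g V \<le> betaR_aux A n (fst (F ! j))" using Suc.IH[OF fj uj cj V] .
      qed
      obtain i where i: "i \<in> S" and gi: "g T \<le> sumi A n F i"
        using step[OF Suc.prems(1,2) c2 Suc.prems(3,4) v IH] by blast
      note gi also have "sumi A n F i \<le> x" unfolding x using Suc.prems(1) i by (intro Max_ge) auto
      finally show "g T \<le> x" .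
    qed
    then show ?thesis using False by (simp add: betaR_Suc)
  qed
qed


lemma sum_swap_cover:
  fixes \<gamma> c :: "nat \<Rightarrow> real"
  assumes "finite V"
  shows "(\<Sum>j<n. \<gamma> j * (\<Sum>x\<in>V \<inter> M j. c x)) = (\<Sum>x\<in>V. c x * (\<Sum>j | j < n \<and> x \<in> M j. \<gamma> j))"
proof -
  have "(\<Sum>j<n. \<gamma> j * (\<Sum>x\<in>V \<inter> M j. c x)) = (\<Sum>j<n. \<Sum>x\<in>V. if x \<in> M j then \<gamma> j * c x else 0)"
  proof (intro sum.cong refl)
    fix j
    have "\<gamma> j * (\<Sum>x\<in>V \<inter> M j. c x) = \<gamma> j * (\<Sum>x\<in>V. if x \<in> M j then c x else 0)"
      using assms by (simp add: sum.inter_restrict)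
    also have "\<dots> = (\<Sum>x\<in>V. if x \<in> M j then \<gamma> j * c x else 0)"
      by (subst sum_distrib_left) (rule sum.cong, auto)
    finally show "\<gamma> j * (\<Sum>x\<in>V \<inter> M j. c x) = (\<Sum>x\<in>V. if x \<in> M j then \<gamma> j * c x else 0)" .
  qed
  also have "\<dots> = (\<Sum>x\<in>V. \<Sum>j<n. if x \<in> M j then \<gamma> j * c x else 0)" by (rule sum.swap)
  also have "\<dots> = (\<Sum>x\<in>V. c x * (\<Sum>j | j < n \<and> x \<in> M j. \<gamma> j))"
  proof (intro sum.cong refl)
    fix x
    have "(\<Sum>j<n. if x \<in> M j then \<gamma> j * c x else 0) = (\<Sum>j\<in>{..<n} \<inter> {j. x \<in> M j}. \<gamma> j * c x)"
      by (simp add: sum.inter_restrict)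
    also have "{..<n} \<inter> {j. x \<in> M j} = {j. j < n \<and> x \<in> M j}" by auto
    finally show "(\<Sum>j<n. if x \<in> M j then \<gamma> j * c x else 0) = c x * (\<Sum>j | j < n \<and> x \<in> M j. \<gamma> j)"
      by (simp add: sum_distrib_left mult.commute)
  qed
  finally show ?thesis .
qed

lemma cover_bound:
  fixes c :: "nat \<Rightarrow> real"
  assumes fin: "finite V" and v: "validF S F" and VS: "V \<subseteq> S" and c: "\<And>x. x \<in> V \<Longrightarrow> 0 \<le> c x"
  shows "(\<Sum>x\<in>V. c x) \<le> (\<Sum>j<length F. snd (F ! j) * (\<Sum>x\<in>V \<inter> fst (F ! j). c x))"
proof -
  have "(\<Sum>x\<in>V. c x) \<le> (\<Sum>x\<in>V. c x * (\<Sum>j | j < length F \<and> x \<in> fst (F ! j). snd (F ! j)))"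
  proof (intro sum_mono)
    fix x assume x: "x \<in> V"
    then have "1 \<le> (\<Sum>j | j < length F \<and> x \<in> fst (F ! j). snd (F ! j))" using v VS by (auto simp: validF_def)
    then show "c x \<le> c x * (\<Sum>j | j < length F \<and> x \<in> fst (F ! j). snd (F ! j))"
      using c[OF x] by (simp add: mult_le_cancel_left1)
  qed
  also have "\<dots> = (\<Sum>j<length F. snd (F ! j) * (\<Sum>x\<in>V \<inter> fst (F ! j). c x))"
    using sum_swap_cover[OF fin, where n = "length F" and \<gamma> = "\<lambda>j. snd (F ! j)" and M = "\<lambda>j. fst (F ! j)" and c = c] by simp
  finally show ?thesis .
qed

definition acyc :: "(nat \<Rightarrow> nat set) \<Rightarrow> nat set \<Rightarrow> bool" where
  "acyc A V \<longleftrightarrow> (\<forall>W \<subseteq> V. W \<noteq> {} \<longrightarrow> (\<exists>s\<in>W. A s \<inter> W = {}))"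

lemma acyc_subset:
  assumes "acyc A V" "W \<subseteq> V" shows "acyc A W"
  unfolding acyc_def
proof (intro allI impI)
  fix X assume "X \<subseteq> W" "X \<noteq> {}"
  then have "X \<subseteq> V" "X \<noteq> {}" using assms(2) by auto
  then show "\<exists>s\<in>X. A s \<inter> X = {}" using assms(1) unfolding acyc_def by blast
qed

lemma acyc_step:
  assumes fin: "finite S" and ne: "S \<noteq> {}" and v: "validF S F" and VS: "V \<subseteq> S" and ac: "acyc A V"
    and IH: "\<forall>j<length F. \<forall>W \<subseteq> fst (F ! j). acyc A W \<longrightarrow> real (card W) \<le> betaR_aux A n (fst (F ! j))"
  shows "\<exists>i\<in>S. real (card V) \<le> sumi A n F i"
proof (cases "V = {}")
  case True
  obtain i where "i \<in> S" using ne by blast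
  then show ?thesis using True sumi_nonneg[OF v] by auto
next
  case False
  then obtain s where s: "s \<in> V" "A s \<inter> V = {}" using ac unfolding acyc_def by blast
  have finV: "finite V" using fin VS finite_subset by blast
  have "real (card V) = (\<Sum>x\<in>V. 1::real)" by simp
  also have "\<dots> \<le> (\<Sum>j<length F. snd (F ! j) * (\<Sum>x\<in>V \<inter> fst (F ! j). 1::real))"
    by (rule cover_bound[OF finV v VS]) simp
  also have "\<dots> \<le> sumi A n F s" unfolding sumi_def
  proof (intro sum_mono)
    fix j assume "j \<in> {..<length F}"
    then have j: "j < length F" by simp
    have g0: "0 \<le> snd (F ! j)" using v j by (auto simp: validF_def)
    show "snd (F ! j) * (\<Sum>x\<in>V \<inter> fst (F ! j). 1::real) \<le> (if fst (F ! j) \<subseteq> A s then 0 else snd (F ! j) * betaR_aux A n (fst (F ! j)))"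
    proof (cases "fst (F ! j) \<subseteq> A s")
      case True
      then have "V \<inter> fst (F ! j) = {}" using s by blast
      then show ?thesis using True by simp
    next
      case False
      have "acyc A (V \<inter> fst (F ! j))" using acyc_subset[OF ac] by blast
      then have "real (card (V \<inter> fst (F ! j))) \<le> betaR_aux A n (fst (F ! j))" using IH j by blast
      then show ?thesis using False g0 by (simp add: mult_left_mono)
    qed
  qed
  finally show ?thesis using s VS by blast
qed

lemma acyc_lower:
  assumes "finite S" "card S \<le> n" "T \<subseteq> S" "acyc A T"
  shows "real (card T) \<le> betaR_aux A n S"
proof -
  let ?g = "\<lambda>T. if acyc A T then real (card T) else 0"
  have "?g T \<le> betaR_aux A n S"
  proof (rule lower_frame[where U = UNIV])
    fix T :: "nat set" assume "card T \<le> 1" then show "?g T \<le> 1" by simp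
  next
    fix n S T F assume fin: "finite S" and c2: "2 \<le> card S" and TS: "T \<subseteq> S" and v: "validF S F"
      and IH: "\<forall>j<length F. \<forall>V \<subseteq> fst (F ! j). ?g V \<le> betaR_aux A n (fst (F ! j))"
    have ne: "S \<noteq> {}" using c2 by auto
    show "\<exists>i\<in>S. ?g T \<le> sumi A n F i"
    proof (cases "acyc A T")
      case True
      have IH': "\<forall>j<length F. \<forall>W \<subseteq> fst (F ! j). acyc A W \<longrightarrow> real (card W) \<le> betaR_aux A n (fst (F ! j))"
      proof (intro allI impI)
        fix j W assume j: "j < length F" and W: "W \<subseteq> fst (F ! j)" and a: "acyc A W"
        have "?g W \<le> betaR_aux A n (fst (F ! j))" using IH j W by blast
        then show "real (card W) \<le> betaR_aux A n (fst (F ! j))" using a by simp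
      qed
      show ?thesis using acyc_step[OF fin ne v TS True IH'] True by simp
    next
      case False
      obtain i where "i \<in> S" using ne by blast
      then show ?thesis using False sumi_nonneg[OF v] by auto
    qed
  qed (use assms in auto)
  then show ?thesis using assms by simp
qed


lemma I6_even: "even x \<Longrightarrow> I6 l x = {x - 1}"
proof -
  assume e: "even x"
  then have "x \<noteq> 4 * l + 1" by presburger
  then show ?thesis using e by (simp add: I6_def)
qed

lemma I6_z: "I6 l (4 * l + 1) = {y. odd y \<and> y < 4 * l}"
proof -
  have "{2 * i - 1 | i. i \<in> {1..2 * l}} = {y. odd y \<and> y < 4 * l}"
  proof (intro set_eqI iffI)
    fix y assume "y \<in> {2 * i - 1 | i. i \<in> {1..2 * l}}"
    then obtain i where i: "y = 2 * i - 1" "1 \<le> i" "i \<le> 2 * l" by auto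
    have "odd y" using i by presburger
    moreover have "y < 4 * l" using i by linarith
    ultimately show "y \<in> {y. odd y \<and> y < 4 * l}" by simp
  next
    fix y assume "y \<in> {y. odd y \<and> y < 4 * l}"
    then have y: "odd y" "y < 4 * l" by auto
    then have "y = 2 * ((y + 1) div 2) - 1" "1 \<le> (y + 1) div 2" "(y + 1) div 2 \<le> 2 * l" by presburger+
    then show "y \<in> {2 * i - 1 | i. i \<in> {1..2 * l}}"
      unfolding mem_Collect_eq by (intro exI[of _ "(y + 1) div 2"]) auto
  qed
  then show ?thesis by (simp add: I6_def)
qed

lemma I6_odd:
  assumes "odd x" "x \<noteq> 4 * l + 1"
  shows "I6 l x = {y. even y \<and> 0 < y \<and> y \<le> 4 * l \<and> y \<noteq> x + 1} \<union> {4 * l + 1}"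
proof -
  have "{2 * j | j. j \<in> {1..2 * l} \<and> j \<noteq> (x + 1) div 2} = {y. even y \<and> 0 < y \<and> y \<le> 4 * l \<and> y \<noteq> x + 1}"
  proof (intro set_eqI iffI)
    fix y assume "y \<in> {2 * j | j. j \<in> {1..2 * l} \<and> j \<noteq> (x + 1) div 2}"
    then obtain j where j: "y = 2 * j" "1 \<le> j" "j \<le> 2 * l" "j \<noteq> (x + 1) div 2" by auto
    have "even y" "0 < y" "y \<le> 4 * l" using j by auto
    moreover have "y \<noteq> x + 1" using j assms(1) by presburger
    ultimately show "y \<in> {y. even y \<and> 0 < y \<and> y \<le> 4 * l \<and> y \<noteq> x + 1}" by simp
  next
    fix y assume "y \<in> {y. even y \<and> 0 < y \<and> y \<le> 4 * l \<and> y \<noteq> x + 1}"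
    then have y: "even y" "0 < y" "y \<le> 4 * l" "y \<noteq> x + 1" by auto
    have a: "y = 2 * (y div 2)" using y by presburger
    have b: "1 \<le> y div 2" using y by presburger
    have c: "y div 2 \<le> 2 * l" using y by presburger
    have d: "y div 2 \<noteq> (x + 1) div 2" using y assms(1) by presburger
    show "y \<in> {2 * j | j. j \<in> {1..2 * l} \<and> j \<noteq> (x + 1) div 2}"
      unfolding mem_Collect_eq by (rule exI[of _ "y div 2"]) (use a b c d in auto)
  qed
  then show ?thesis using assms by (simp add: I6_def)
qed

definition wt :: "nat \<Rightarrow> real" where "wt x = (if even x then 1 else 1 / 2)"
definition hT :: "nat set \<Rightarrow> real" where "hT T = (\<Sum>x\<in>T. wt x)"

lemma wt_bounds: "0 \<le> wt x" "wt x \<le> 1" by (auto simp: wt_def)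

lemma hT_nonneg: "0 \<le> hT T" unfolding hT_def by (intro sum_nonneg) (simp add: wt_bounds)

lemma hT_le_card: "finite T \<Longrightarrow> hT T \<le> real (card T)"
proof -
  assume "finite T"
  have "hT T \<le> (\<Sum>x\<in>T. 1)" unfolding hT_def by (intro sum_mono) (simp add: wt_bounds)
  then show ?thesis by simp
qed

lemma hT_mono: "finite T \<Longrightarrow> V \<subseteq> T \<Longrightarrow> hT V \<le> hT T"
  unfolding hT_def by (intro sum_mono2) (auto simp: wt_bounds)

lemma acyc1:
  assumes TU: "T \<subseteq> {1..4 * l + 1}" and E1: "card {x\<in>T. even x} \<le> 1" and zT: "4 * l + 1 \<notin> T"
  shows "acyc (I6 l) T"
  unfolding acyc_def
proof (intro allI impI)
  fix W assume WT: "W \<subseteq> T" and Wne: "W \<noteq> {}"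
  have finT: "finite T" using finite_subset[OF TU] by simp
  have finE: "finite {x\<in>T. even x}" using finT by simp
  have EU: "\<forall>a1\<in>{x\<in>T. even x}. \<forall>a2\<in>{x\<in>T. even x}. a1 = a2"
    using card_le_Suc0_iff_eq[OF finE] E1 by simp
  have Euniq: "\<And>a b. a \<in> T \<Longrightarrow> b \<in> T \<Longrightarrow> even a \<Longrightarrow> even b \<Longrightarrow> a = b"
    using EU by blast
  show "\<exists>s\<in>W. I6 l s \<inter> W = {}"
  proof (cases "\<exists>e\<in>W. even e \<and> e - 1 \<notin> W")
    case True
    then obtain e where e: "e \<in> W" "even e" "e - 1 \<notin> W" by blast
    have "I6 l e \<inter> W = {}" using e by (simp add: I6_even)
    then show ?thesis using e(1) by blast
  next
    case False
    show ?thesis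
    proof (cases "\<exists>e\<in>W. even e")
      case True
      then obtain e where e: "e \<in> W" "even e" by blast
      with False have e1: "e - 1 \<in> W" by blast
      have "e \<in> {1..4 * l + 1}" using e WT TU by blast
      then have "1 \<le> e" by simp
      then have e2: "2 \<le> e" using e(2) by presburger
      have o: "odd (e - 1)" using e(2) e2 by presburger
      have nz: "e - 1 \<noteq> 4 * l + 1" using e1 WT zT by auto
      have "I6 l (e - 1) \<inter> W = {}"
      proof (rule ccontr)
        assume "I6 l (e - 1) \<inter> W \<noteq> {}"
        then obtain y where y: "y \<in> I6 l (e - 1)" "y \<in> W" by blast
        have "y \<noteq> 4 * l + 1" using y(2) WT zT by blast
        then have "even y" "y \<noteq> e" using y(1) I6_odd[OF o nz] e2 by auto
        then show False using Euniq[of y e] y(2) e WT by blast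
      qed
      then show ?thesis using e1 by blast
    next
      case False
      obtain s where s: "s \<in> W" using Wne by blast
      then have "odd s" using False by blast
      moreover have "s \<noteq> 4 * l + 1" using s WT zT by blast
      ultimately have "I6 l s \<inter> W = {}" using False WT zT by (auto simp: I6_odd)
      then show ?thesis using s by blast
    qed
  qed
qed

lemma acyc2:
  assumes TU: "T \<subseteq> {1..4 * l + 1}" and O: "\<forall>x\<in>T. odd x \<longrightarrow> x = 4 * l + 1"
  shows "acyc (I6 l) T"
  unfolding acyc_def
proof (intro allI impI)
  fix W assume WT: "W \<subseteq> T" and Wne: "W \<noteq> {}"
  show "\<exists>s\<in>W. I6 l s \<inter> W = {}"
  proof (cases "4 * l + 1 \<in> W")
    case True
    have "I6 l (4 * l + 1) \<inter> W = {}"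
    proof (rule ccontr)
      assume "I6 l (4 * l + 1) \<inter> W \<noteq> {}"
      then obtain y where y: "y \<in> I6 l (4 * l + 1)" "y \<in> W" by blast
      then have "y \<in> {y. odd y \<and> y < 4 * l}" by (simp only: I6_z)
      then have "odd y" "y < 4 * l" by auto
      then show False using O y(2) WT by auto
    qed
    then show ?thesis using True by blast
  next
    case False
    obtain s where s: "s \<in> W" using Wne by blast
    then have es: "even s" using O WT False by blast
    have "s \<in> {1..4 * l + 1}" using s WT TU by blast
    then have s2: "1 \<le> s" by simp
    have "s - 1 \<notin> W"
    proof
      assume "s - 1 \<in> W"
      moreover have "odd (s - 1)" using es s2 by presburger
      ultimately have "s - 1 = 4 * l + 1" using O WT by blast
      moreover have "s \<le> 4 * l + 1" using \<open>s \<in> {1..4 * l + 1}\<close> by simp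
      ultimately show False using s2 by linarith
    qed
    then have "I6 l s \<inter> W = {}" using es by (simp add: I6_even)
    then show ?thesis using s by blast
  qed
qed


lemma B_step:
  assumes fin: "finite S" and SU: "S \<subseteq> {1..4 * l + 1}" and c2: "2 \<le> card S" and cS: "card S \<le> Suc n"
    and TS: "T \<subseteq> S" and v: "validF S F"
    and IH: "\<forall>j<length F. \<forall>V \<subseteq> fst (F ! j). hT V \<le> betaR_aux (I6 l) n (fst (F ! j))"
  shows "\<exists>i\<in>S. hT T \<le> sumi (I6 l) n F i"
proof -
  define E where "E = {x\<in>T. even x}"
  have finT: "finite T" using fin TS finite_subset by blast
  have finE: "finite E" using finT by (simp add: E_def)
  have ES: "E \<subseteq> S" using TS by (auto simp: E_def)
  have ne: "S \<noteq> {}" using c2 by auto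
  show ?thesis
  proof (cases "2 \<le> card E")
    case True
    define k where "k = real (card E)"
    have k2: "2 \<le> k" using True by (simp add: k_def)
    have Ene: "E \<noteq> {}" using True by auto
    have key: "k * (snd (F ! j) * hT (T \<inter> fst (F ! j)))
        \<le> (\<Sum>i\<in>E. if fst (F ! j) \<subseteq> I6 l i then 0 else snd (F ! j) * betaR_aux (I6 l) n (fst (F ! j)))"
      if j: "j < length F" for j
    proof -
      define M where "M = fst (F ! j)"
      define g where "g = snd (F ! j)"
      define b where "b = betaR_aux (I6 l) n M"
      have g0: "0 \<le> g" and Mne: "M \<noteq> {}" and MS: "M \<subset> S"
        using v j by (auto simp: validF_def M_def g_def)
      have "k * (g * hT (T \<inter> M)) \<le> (\<Sum>i\<in>E. if M \<subseteq> I6 l i then 0 else g * b)"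
      proof (cases "\<exists>x\<in>E. M \<subseteq> I6 l x")
        case True
        then obtain x where x: "x \<in> E" "M \<subseteq> I6 l x" by blast
        have ex: "even x" using x(1) by (simp add: E_def)
        have "x \<in> {1..4 * l + 1}" using x(1) ES SU by blast
        then have "1 \<le> x" by simp
        then have x2: "2 \<le> x" using ex by presburger
        have M1: "M = {x - 1}" using x(2) Mne by (auto simp: I6_even[OF ex])
        have b1: "b = 1" by (simp add: b_def M1)
        have eqi: "(M \<subseteq> I6 l i) \<longleftrightarrow> i = x" if i: "i \<in> E" for i
        proof -
          have ei: "even i" using i by (simp add: E_def)
          have "i \<in> {1..4 * l + 1}" using i ES SU by blast
          then have "1 \<le> i" by simp
          then show ?thesis using x2 by (simp add: M1 I6_even[OF ei]) linarith
        qed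
        have "(\<Sum>i\<in>E. if M \<subseteq> I6 l i then 0 else g * b) = (\<Sum>i\<in>E. if i = x then 0 else g)"
          using eqi b1 by (intro sum.cong) auto
        also have "\<dots> = (if x = x then 0 else g) + (\<Sum>i\<in>E - {x}. if i = x then 0 else g)"
          by (rule sum.remove[OF finE x(1)])
        also have "\<dots> = (\<Sum>i\<in>E - {x}. g)"
        proof -
          have "(\<Sum>i\<in>E - {x}. if i = x then 0 else g) = (\<Sum>i\<in>E - {x}. g)" by (rule sum.cong) auto
          then show ?thesis by simp
        qed
        also have "\<dots> = (k - 1) * g"
        proof -
          have "E \<noteq> {}" using x(1) by blast
          then have cE: "1 \<le> card E" using finE by (simp add: Suc_le_eq card_gt_0_iff)
          then show ?thesis using finE x(1) by (simp add: k_def of_nat_diff)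
        qed
        finally have lhs: "(\<Sum>i\<in>E. if M \<subseteq> I6 l i then 0 else g * b) = (k - 1) * g" .
        have "hT (T \<inter> M) \<le> hT {x - 1}" by (rule hT_mono) (auto simp: M1)
        also have "\<dots> = 1 / 2"
        proof -
          have "odd (x - 1)" using ex x2 by presburger
          then show ?thesis by (simp add: hT_def wt_def)
        qed
        finally have h12: "hT (T \<inter> M) \<le> 1 / 2" .
        have "k * (g * hT (T \<inter> M)) \<le> k * (g * (1 / 2))"
          using h12 g0 k2 by (intro mult_left_mono) auto
        also have "\<dots> \<le> (k - 1) * g"
        proof -
          have "0 \<le> g * (k - 2)" using g0 k2 by simp
          then show ?thesis by (simp add: algebra_simps)
        qed
        finally show ?thesis using lhs by simp
      next
        case False
        then have lhs: "(\<Sum>i\<in>E. if M \<subseteq> I6 l i then 0 else g * b) = k * (g * b)"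
          by (simp add: k_def)
        have "hT (T \<inter> M) \<le> b" using IH j by (auto simp: b_def M_def)
        then have "k * (g * hT (T \<inter> M)) \<le> k * (g * b)"
          using g0 k2 by (intro mult_left_mono) auto
        then show ?thesis using lhs by simp
      qed
      then show ?thesis unfolding b_def g_def M_def .
    qed
    have cov: "hT T \<le> (\<Sum>j<length F. snd (F ! j) * hT (T \<inter> fst (F ! j)))"
      using cover_bound[OF finT v TS, of wt] wt_bounds unfolding hT_def by simp
    have "k * hT T \<le> (\<Sum>j<length F. k * (snd (F ! j) * hT (T \<inter> fst (F ! j))))"
      using cov k2 by (simp add: sum_distrib_left[symmetric])
    also have "\<dots> \<le> (\<Sum>j<length F. \<Sum>i\<in>E. if fst (F ! j) \<subseteq> I6 l i then 0 else snd (F ! j) * betaR_aux (I6 l) n (fst (F ! j)))"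
      using key by (intro sum_mono) auto
    also have "\<dots> = (\<Sum>i\<in>E. sumi (I6 l) n F i)" unfolding sumi_def by (rule sum.swap)
    finally have tot: "k * hT T \<le> (\<Sum>i\<in>E. sumi (I6 l) n F i)" .
    show ?thesis
    proof (rule ccontr)
      assume "\<not> (\<exists>i\<in>S. hT T \<le> sumi (I6 l) n F i)"
      then have lt: "\<And>i. i \<in> E \<Longrightarrow> sumi (I6 l) n F i < hT T" using ES by force
      have "(\<Sum>i\<in>E. sumi (I6 l) n F i) < (\<Sum>i\<in>E. hT T)"
        by (rule sum_strict_mono[OF finE Ene lt])
      also have "\<dots> = k * hT T" by (simp add: k_def)
      finally show False using tot by simp
    qed
  next
    case False
    then have E1: "card {x\<in>T. even x} \<le> 1" by (simp add: E_def)
    have TU: "T \<subseteq> {1..4 * l + 1}" using TS SU by blast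
    have IHA: "\<forall>j<length F. \<forall>W \<subseteq> fst (F ! j). acyc (I6 l) W \<longrightarrow> real (card W) \<le> betaR_aux (I6 l) n (fst (F ! j))"
    proof (intro allI impI)
      fix j W assume j: "j < length F" and W: "W \<subseteq> fst (F ! j)" and a: "acyc (I6 l) W"
      have sub: "fst (F ! j) \<subset> S" using v j by (auto simp: validF_def)
      have fj: "finite (fst (F ! j))" using sub fin finite_subset by blast
      have "card (fst (F ! j)) < card S" using psubset_card_mono[OF fin sub] .
      then have cj: "card (fst (F ! j)) \<le> n" using cS by linarith
      show "real (card W) \<le> betaR_aux (I6 l) n (fst (F ! j))" by (rule acyc_lower[OF fj cj W a])
    qed
    obtain V where V: "V \<subseteq> T" "acyc (I6 l) V" "hT T \<le> real (card V)"
    proof (cases "4 * l + 1 \<in> T")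
      case False
      then show ?thesis using that[of T] acyc1[OF TU E1 False] hT_le_card[OF finT] by blast
    next
      case zin: True
      show ?thesis
      proof (cases "\<exists>u\<in>T. odd u \<and> u \<noteq> 4 * l + 1")
        case True
        then obtain u where u: "u \<in> T" "odd u" "u \<noteq> 4 * l + 1" by blast
        have TU': "T - {4 * l + 1} \<subseteq> {1..4 * l + 1}" using TU by blast
        have "card {x\<in>T - {4 * l + 1}. even x} \<le> card {x\<in>T. even x}"
          using finT by (intro card_mono) auto
        then have E1': "card {x\<in>T - {4 * l + 1}. even x} \<le> 1" using E1 by linarith
        have ac: "acyc (I6 l) (T - {4 * l + 1})" by (rule acyc1[OF TU' E1']) simp
        have o2: "u \<in> T - {4 * l + 1}" using u by blast
        have fin': "finite (T - {4 * l + 1})" using finT by simp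
        have h1: "hT T = wt (4 * l + 1) + hT (T - {4 * l + 1})"
          unfolding hT_def by (rule sum.remove[OF finT zin])
        have h2: "hT (T - {4 * l + 1}) = wt u + hT (T - {4 * l + 1} - {u})"
          unfolding hT_def by (rule sum.remove[OF fin' o2])
        have h3: "hT (T - {4 * l + 1} - {u}) \<le> real (card (T - {4 * l + 1} - {u}))"
          using fin' by (intro hT_le_card) simp
        have "T - {4 * l + 1} \<noteq> {}" using o2 by blast
        then have c1: "card (T - {4 * l + 1}) \<ge> 1" using fin' by (simp add: Suc_le_eq card_gt_0_iff)
        have h4: "real (card (T - {4 * l + 1} - {u})) = real (card (T - {4 * l + 1})) - 1"
          using o2 fin' c1 by (simp add: of_nat_diff)
        have w1: "wt (4 * l + 1) = 1 / 2" by (simp add: wt_def)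
        have w2: "wt u = 1 / 2" using u(2) by (simp add: wt_def)
        have "hT T \<le> real (card (T - {4 * l + 1}))" using h1 h2 h3 h4 w1 w2 by linarith
        then show ?thesis using that[of "T - {4 * l + 1}"] ac by blast
      next
        case False
        then have O: "\<forall>x\<in>T. odd x \<longrightarrow> x = 4 * l + 1" by blast
        then show ?thesis using that[of T] acyc2[OF TU O] hT_le_card[OF finT] by blast
      qed
    qed
    obtain i where i: "i \<in> S" "real (card V) \<le> sumi (I6 l) n F i"
      using acyc_step[OF fin ne v _ V(2) IHA] V(1) TS by blast
    then show ?thesis using V(3) by force
  qed
qed


lemma hT_lower:
  assumes "finite S" "S \<subseteq> {1..4 * l + 1}" "card S \<le> n" "T \<subseteq> S"
  shows "hT T \<le> betaR_aux (I6 l) n S"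
proof (rule lower_frame[where U = "{1..4 * l + 1}" and g = hT, OF _ _ assms])
  fix T :: "nat set" assume c: "card T \<le> 1" and TU: "T \<subseteq> {1..4 * l + 1}"
  have "finite T" using TU finite_subset by blast
  then have "hT T \<le> real (card T)" by (rule hT_le_card)
  also have "\<dots> \<le> 1" using c by simp
  finally show "hT T \<le> 1" .
next
  fix n S T F assume "finite S" "S \<subseteq> {1..4 * l + 1}" "2 \<le> card S" "card S \<le> Suc n" "T \<subseteq> S" "validF S F"
    "\<forall>j<length F. \<forall>V\<subseteq>fst (F ! j). hT V \<le> betaR_aux (I6 l) n (fst (F ! j))"
  then show "\<exists>i\<in>S. hT T \<le> sumi (I6 l) n F i" by (rule B_step)
qed

lemma hT_U: "hT {1..4 * l + 1} = 3 * real l + 1 / 2"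
proof (induction l)
  case 0
  then show ?case by (simp add: hT_def wt_def)
next
  case (Suc l)
  have eq: "{1..4 * Suc l + 1} = insert (4 * l + 5) (insert (4 * l + 4) (insert (4 * l + 3) (insert (4 * l + 2) {1..4 * l + 1})))"
    by auto
  have e1: "wt (4 * l + 5) = 1 / 2" "wt (4 * l + 4) = 1" "wt (4 * l + 3) = 1 / 2" "wt (4 * l + 2) = 1"
    by (simp_all add: wt_def)
  have "hT {1..4 * Suc l + 1} = wt (4 * l + 5) + wt (4 * l + 4) + wt (4 * l + 3) + wt (4 * l + 2) + hT {1..4 * l + 1}"
    unfolding eq hT_def by (simp add: add.assoc)
  then show ?case using Suc.IH e1 by simp
qed


lemma sumi_le:
  assumes v: "validF M F" and ub: "\<And>j. j < length F \<Longrightarrow> betaR_aux A n (fst (F ! j)) \<le> ub j"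
  shows "sumi A n F i \<le> (\<Sum>j<length F. if fst (F ! j) \<subseteq> A i then 0 else snd (F ! j) * ub j)"
  unfolding sumi_def
proof (intro sum_mono)
  fix j assume "j \<in> {..<length F}"
  then have j: "j < length F" by simp
  have "0 \<le> snd (F ! j)" using v j by (auto simp: validF_def)
  then show "(if fst (F ! j) \<subseteq> A i then 0 else snd (F ! j) * betaR_aux A n (fst (F ! j)))
     \<le> (if fst (F ! j) \<subseteq> A i then 0 else snd (F ! j) * ub j)"
    using ub[OF j] by (simp add: mult_left_mono)
qed

definition P2 :: "nat \<Rightarrow> nat \<Rightarrow> nat set" where
  "P2 a b = {2 * a - 1, 2 * a, 2 * b - 1, 2 * b}"

lemma card_le_diff_mem: "finite M \<Longrightarrow> y \<in> M \<Longrightarrow> y \<in> B \<Longrightarrow> card (M - B) \<le> card M - 1"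
proof -
  assume f: "finite M" and y: "y \<in> M" "y \<in> B"
  have "M - B \<subseteq> M - {y}" using y by blast
  then have "card (M - B) \<le> card (M - {y})" using f by (intro card_mono) auto
  then show ?thesis using f y by simp
qed

lemma pair_upper:
  assumes ab: "a \<noteq> b" "1 \<le> a" "a \<le> 2 * l" "1 \<le> b" "b \<le> 2 * l"
  shows "betaR_aux (I6 l) (Suc n) (P2 a b) \<le> 3"
proof -
  have d: "2*a-1 \<noteq> 2*a" "2*a-1 \<noteq> 2*b-1" "2*a-1 \<noteq> 2*b" "2*a \<noteq> 2*b-1" "2*a \<noteq> 2*b" "2*b-1 \<noteq> 2*b"
    using ab by presburger+
  have c4: "card (P2 a b) = 4" using d by (simp add: P2_def)
  have fin: "finite (P2 a b)" by (simp add: P2_def)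
  have mem: "\<exists>y\<in>P2 a b. y \<in> I6 l i" if i: "i \<in> P2 a b" for i
  proof -
    have "i = 2 * a - 1 \<or> i = 2 * a \<or> i = 2 * b - 1 \<or> i = 2 * b" using i by (simp add: P2_def)
    then show ?thesis
    proof (elim disjE)
      assume i1: "i = 2 * a - 1"
      have "odd i" "i \<noteq> 4 * l + 1" using i1 ab by presburger+
      then have "2 * b \<in> I6 l i" using i1 ab by (simp add: I6_odd)
      then show ?thesis by (auto simp: P2_def)
    next
      assume i1: "i = 2 * a"
      then have "2 * a - 1 \<in> I6 l i" by (simp add: I6_even)
      then show ?thesis by (auto simp: P2_def)
    next
      assume i1: "i = 2 * b - 1"
      have "odd i" "i \<noteq> 4 * l + 1" using i1 ab by presburger+
      then have "2 * a \<in> I6 l i" using i1 ab by (simp add: I6_odd)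
      then show ?thesis by (auto simp: P2_def)
    next
      assume i1: "i = 2 * b"
      then have "2 * b - 1 \<in> I6 l i" by (simp add: I6_even)
      then show ?thesis by (auto simp: P2_def)
    qed
  qed
  have "betaR_aux (I6 l) (Suc n) (P2 a b) \<le> real 3"
  proof (rule betaR_upper_single[OF fin])
    show "2 \<le> card (P2 a b)" using c4 by simp
    fix i assume "i \<in> P2 a b"
    then obtain y where "y \<in> P2 a b" "y \<in> I6 l i" using mem by blast
    then show "card (P2 a b - I6 l i) \<le> 3" using card_le_diff_mem[OF fin] c4 by fastforce
  qed
  then show ?thesis by simp
qed

lemma oz_upper:
  assumes "odd u" "u < 4 * l"
  shows "betaR_aux (I6 l) (Suc n) {u, 4 * l + 1} \<le> 1"
proof -
  have ne: "u \<noteq> 4 * l + 1" using assms by simp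
  have "betaR_aux (I6 l) (Suc n) {u, 4 * l + 1} \<le> real 1"
  proof (rule betaR_upper_single)
    show "2 \<le> card {u, 4 * l + 1}" using ne by simp
    fix i assume i: "i \<in> {u, 4 * l + 1}"
    have A1: "4 * l + 1 \<in> I6 l u" using assms ne by (simp add: I6_odd)
    have A2: "u \<in> I6 l (4 * l + 1)" using assms by (simp only: I6_z) simp
    show "card ({u, 4 * l + 1} - I6 l i) \<le> 1"
    proof (cases "i = u")
      case True
      then show ?thesis using card_le_diff_mem[of "{u, 4 * l + 1}" "4 * l + 1" "I6 l i"] A1 ne by simp
    next
      case False
      then have "i = 4 * l + 1" using i by blast
      then show ?thesis using card_le_diff_mem[of "{u, 4 * l + 1}" u "I6 l i"] A2 ne by simp
    qed
  qed simp
  then show ?thesis by simp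
qed


definition phi :: "nat \<Rightarrow> nat \<Rightarrow> nat set \<times> real" where
  "phi l j = (if j = 0 then (P2 1 2, 1/2) else if j = 1 then (P2 1 3, 1/2) else if j = 2 then (P2 2 3, 1/2)
     else if j \<le> l then (P2 (2*j-2) (2*j-1), 1) else if j = l+1 then ({4*l}, 1) else ({4*l-1, 4*l+1}, 1))"

definition Ftop :: "nat \<Rightarrow> (nat set \<times> real) list" where
  "Ftop l = map (phi l) [0..<l+3]"

lemma Ftop_len: "length (Ftop l) = l + 3" by (simp add: Ftop_def)
lemma Ftop_nth: "j < l + 3 \<Longrightarrow> Ftop l ! j = phi l j" by (simp add: Ftop_def del: upt_Suc)

lemma P2_sub:
  assumes "1 \<le> a" "a \<le> 2 * l" "1 \<le> b" "b \<le> 2 * l"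
  shows "P2 a b \<subset> {1..4 * l + 1}"
proof -
  have "P2 a b \<subseteq> {1..4 * l + 1}" using assms by (auto simp: P2_def)
  moreover have "4 * l + 1 \<notin> P2 a b" using assms by (auto simp: P2_def)
  ultimately show ?thesis by auto
qed

lemma phi_cases:
  assumes "j < l + 3" "2 \<le> l"
  shows "(j < 3 \<and> (\<exists>a b. fst (phi l j) = P2 a b \<and> a \<noteq> b \<and> 1 \<le> a \<and> a \<le> 2 * l \<and> 1 \<le> b \<and> b \<le> 2 * l) \<and> snd (phi l j) = 1/2)
    \<or> (3 \<le> j \<and> j \<le> l \<and> (\<exists>a b. fst (phi l j) = P2 a b \<and> a \<noteq> b \<and> 1 \<le> a \<and> a \<le> 2 * l \<and> 1 \<le> b \<and> b \<le> 2 * l) \<and> snd (phi l j) = 1)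
    \<or> (j = l + 1 \<and> phi l j = ({4*l}, 1))
    \<or> (j = l + 2 \<and> phi l j = ({4*l-1, 4*l+1}, 1))"
proof -
  consider "j = 0" | "j = 1" | "j = 2" | "3 \<le> j \<and> j \<le> l" | "j = l + 1" | "j = l + 2" using assms by linarith
  then show ?thesis
  proof cases
    case 1
    have "\<exists>a b. fst (phi l j) = P2 a b \<and> a \<noteq> b \<and> 1 \<le> a \<and> a \<le> 2 * l \<and> 1 \<le> b \<and> b \<le> 2 * l"
      using assms 1 by (intro exI[of _ "1::nat"] exI[of _ "2::nat"]) (simp add: phi_def)
    moreover have "snd (phi l j) = 1/2" using 1 by (simp add: phi_def)
    ultimately show ?thesis using 1 by (intro disjI1) auto
  next
    case 2
    have "\<exists>a b. fst (phi l j) = P2 a b \<and> a \<noteq> b \<and> 1 \<le> a \<and> a \<le> 2 * l \<and> 1 \<le> b \<and> b \<le> 2 * l"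
      using assms 2 by (intro exI[of _ "1::nat"] exI[of _ "3::nat"]) (simp add: phi_def)
    moreover have "snd (phi l j) = 1/2" using 2 by (simp add: phi_def)
    ultimately show ?thesis using 2 by (intro disjI1) auto
  next
    case 3
    have "\<exists>a b. fst (phi l j) = P2 a b \<and> a \<noteq> b \<and> 1 \<le> a \<and> a \<le> 2 * l \<and> 1 \<le> b \<and> b \<le> 2 * l"
      using assms 3 by (intro exI[of _ "2::nat"] exI[of _ "3::nat"]) (simp add: phi_def)
    moreover have "snd (phi l j) = 1/2" using 3 by (simp add: phi_def)
    ultimately show ?thesis using 3 by (intro disjI1) auto
  next
    case 4
    then have "fst (phi l j) = P2 (2*j-2) (2*j-1)" "snd (phi l j) = 1" by (auto simp: phi_def)
    moreover have "2*j-2 \<noteq> 2*j-1" "1 \<le> 2*j-2" "2*j-2 \<le> 2*l" "1 \<le> 2*j-1" "2*j-1 \<le> 2*l" using 4 by auto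
    ultimately have "3 \<le> j \<and> j \<le> l \<and> (\<exists>a b. fst (phi l j) = P2 a b \<and> a \<noteq> b \<and> 1 \<le> a \<and> a \<le> 2 * l \<and> 1 \<le> b \<and> b \<le> 2 * l) \<and> snd (phi l j) = 1"
      using 4 by blast
    then show ?thesis by blast
  next
    case 5 then show ?thesis using assms by (auto simp: phi_def)
  next
    case 6 then show ?thesis using assms by (auto simp: phi_def)
  qed
qed

lemma Ftop_cover_aux:
  assumes "finite J" "J \<subseteq> {j. j < l + 3 \<and> i \<in> fst (phi l j)}" "1 \<le> (\<Sum>j\<in>J. snd (phi l j))"
    and nn: "\<And>j. 0 \<le> snd (phi l j)"
  shows "1 \<le> (\<Sum>j | j < length (Ftop l) \<and> i \<in> fst (Ftop l ! j). snd (Ftop l ! j))"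
proof -
  have eq: "(\<Sum>j | j < length (Ftop l) \<and> i \<in> fst (Ftop l ! j). snd (Ftop l ! j))
      = (\<Sum>j | j < l + 3 \<and> i \<in> fst (phi l j). snd (phi l j))"
    by (rule sum.cong) (auto simp: Ftop_len Ftop_nth)
  have "(\<Sum>j\<in>J. snd (phi l j)) \<le> (\<Sum>j | j < l + 3 \<and> i \<in> fst (phi l j). snd (phi l j))"
    by (rule sum_mono2) (use assms in auto)
  then show ?thesis using eq assms(3) by simp
qed

lemma phi_nn: "0 \<le> snd (phi l j)" by (simp add: phi_def)

lemma Ftop_valid:
  assumes l2: "2 \<le> l"
  shows "validF {1..4 * l + 1} (Ftop l)"
  unfolding validF_def
proof (intro conjI allI impI ballI)
  fix j assume "j < length (Ftop l)"
  then have j: "j < l + 3" by (simp add: Ftop_len)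
  have "fst (phi l j) \<noteq> {} \<and> fst (phi l j) \<subset> {1..4 * l + 1} \<and> 0 \<le> snd (phi l j) \<and> snd (phi l j) \<le> 1"
    using phi_cases[OF j l2]
  proof (elim disjE conjE exE)
    fix a b assume "fst (phi l j) = P2 a b" "a \<noteq> b" "1 \<le> a" "a \<le> 2 * l" "1 \<le> b" "b \<le> 2 * l" "snd (phi l j) = 1/2"
    then show ?thesis using P2_sub[of a l b] by (auto simp: P2_def)
  next
    fix a b assume "fst (phi l j) = P2 a b" "a \<noteq> b" "1 \<le> a" "a \<le> 2 * l" "1 \<le> b" "b \<le> 2 * l" "snd (phi l j) = 1"
    then show ?thesis using P2_sub[of a l b] by (auto simp: P2_def)
  next
    assume "phi l j = ({4*l}, 1)"
    moreover have "{4*l} \<subset> {1..4 * l + 1}"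
    proof -
      have "{4*l} \<subseteq> {1..4 * l + 1}" using l2 by auto
      moreover have "1 \<notin> {4*l}" using l2 by auto
      moreover have "1 \<in> {1..4 * l + 1}" by simp
      ultimately show ?thesis by blast
    qed
    ultimately show ?thesis by simp
  next
    assume "phi l j = ({4*l-1, 4*l+1}, 1)"
    moreover have "{4*l-1, 4*l+1} \<subset> {1..4 * l + 1}"
    proof -
      have "{4*l-1, 4*l+1} \<subseteq> {1..4 * l + 1}" using l2 by auto
      moreover have "1 \<notin> {4*l-1, 4*l+1}" using l2 by auto
      moreover have "1 \<in> {1..4 * l + 1}" by simp
      ultimately show ?thesis by blast
    qed
    ultimately show ?thesis by simp
  qed
  then show "fst (Ftop l ! j) \<noteq> {}" "fst (Ftop l ! j) \<subset> {1..4 * l + 1}" "0 \<le> snd (Ftop l ! j)" "snd (Ftop l ! j) \<le> 1"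
    using j by (simp_all add: Ftop_nth)
next
  fix i assume i: "i \<in> {1..4 * l + 1}"
  show "1 \<le> (\<Sum>j | j < length (Ftop l) \<and> i \<in> fst (Ftop l ! j). snd (Ftop l ! j))"
  proof -
    consider "i \<le> 2" | "3 \<le> i \<and> i \<le> 4" | "5 \<le> i \<and> i \<le> 6" | "7 \<le> i \<and> i \<le> 4 * l - 2" | "i = 4 * l" | "i = 4 * l - 1 \<or> i = 4 * l + 1"
    proof -
      have "1 \<le> i" "i \<le> 4 * l + 1" using i by auto
      then show "(i \<le> 2 \<Longrightarrow> thesis) \<Longrightarrow> (3 \<le> i \<and> i \<le> 4 \<Longrightarrow> thesis) \<Longrightarrow> (5 \<le> i \<and> i \<le> 6 \<Longrightarrow> thesis) \<Longrightarrow>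
        (7 \<le> i \<and> i \<le> 4 * l - 2 \<Longrightarrow> thesis) \<Longrightarrow> (i = 4 * l \<Longrightarrow> thesis) \<Longrightarrow> (i = 4 * l - 1 \<or> i = 4 * l + 1 \<Longrightarrow> thesis) \<Longrightarrow> thesis"
        using l2 by arith
    qed
    then show ?thesis
    proof cases
      case 1
      then have "i = 1 \<or> i = 2" using i by auto
      then have "i \<in> fst (phi l 0)" "i \<in> fst (phi l 1)" by (auto simp: phi_def P2_def)
      then show ?thesis using l2 by (intro Ftop_cover_aux[where J = "{0, 1}"] phi_nn) (auto simp: phi_def)
    next
      case 2
      then have "i = 3 \<or> i = 4" by auto
      then have "i \<in> fst (phi l 0)" "i \<in> fst (phi l 2)" by (auto simp: phi_def P2_def)
      then show ?thesis using l2 by (intro Ftop_cover_aux[where J = "{0, 2}"] phi_nn) (auto simp: phi_def)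
    next
      case 3
      then have "i = 5 \<or> i = 6" by auto
      then have "i \<in> fst (phi l 1)" "i \<in> fst (phi l 2)" by (auto simp: phi_def P2_def)
      then show ?thesis using l2 by (intro Ftop_cover_aux[where J = "{1, 2}"] phi_nn) (auto simp: phi_def)
    next
      case 4
      define k where "k = (i + 1) div 2"
      define j where "j = (k + 2) div 2"
      have ik: "i = 2 * k - 1 \<or> i = 2 * k" unfolding k_def by presburger
      have k4: "4 \<le> k" "k \<le> 2 * l - 1" using 4 unfolding k_def by presburger+
      have kj: "k = 2 * j - 2 \<or> k = 2 * j - 1" unfolding j_def by presburger
      have j3: "3 \<le> j" "j \<le> l" using k4 unfolding j_def by presburger+
      have "i = 2 * (2 * j - 2) - 1 \<or> i = 2 * (2 * j - 2) \<or> i = 2 * (2 * j - 1) - 1 \<or> i = 2 * (2 * j - 1)"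
        using ik kj by auto
      then have "i \<in> fst (phi l j)" using j3 by (auto simp: phi_def P2_def)
      moreover have "snd (phi l j) = 1" using j3 by (simp add: phi_def)
      ultimately show ?thesis using j3 by (intro Ftop_cover_aux[where J = "{j}"] phi_nn) auto
    next
      case 5
      then have "i \<in> fst (phi l (l + 1))" "snd (phi l (l + 1)) = 1" using l2 by (auto simp: phi_def)
      then show ?thesis by (intro Ftop_cover_aux[where J = "{l + 1}"] phi_nn) auto
    next
      case 6
      then have "i \<in> fst (phi l (l + 2))" "snd (phi l (l + 2)) = 1" using l2 by (auto simp: phi_def)
      then show ?thesis by (intro Ftop_cover_aux[where J = "{l + 2}"] phi_nn) auto
    qed
  qed
qed


definition ubt :: "nat \<Rightarrow> nat \<Rightarrow> real" where "ubt l j = (if j \<le> l then 3 else 1)"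

lemma Ftop_ub:
  assumes l2: "2 \<le> l" and j: "j < length (Ftop l)"
  shows "betaR_aux (I6 l) (4 * l) (fst (Ftop l ! j)) \<le> ubt l j"
proof -
  have j3: "j < l + 3" using j by (simp add: Ftop_len)
  have n: "4 * l = Suc (4 * l - 1)" using l2 by simp
  have "betaR_aux (I6 l) (Suc (4 * l - 1)) (fst (phi l j)) \<le> ubt l j"
    using phi_cases[OF j3 l2]
  proof (elim disjE conjE exE)
    fix a b assume a: "fst (phi l j) = P2 a b" "a \<noteq> b" "1 \<le> a" "a \<le> 2 * l" "1 \<le> b" "b \<le> 2 * l" "j < 3"
    have "betaR_aux (I6 l) (Suc (4 * l - 1)) (P2 a b) \<le> 3" by (rule pair_upper) (use a in auto)
    moreover have "ubt l j = 3" using a l2 by (simp add: ubt_def)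
    ultimately show ?thesis using a by simp
  next
    fix a b assume a: "fst (phi l j) = P2 a b" "a \<noteq> b" "1 \<le> a" "a \<le> 2 * l" "1 \<le> b" "b \<le> 2 * l" "j \<le> l"
    have "betaR_aux (I6 l) (Suc (4 * l - 1)) (P2 a b) \<le> 3" by (rule pair_upper) (use a in auto)
    moreover have "ubt l j = 3" using a l2 by (simp add: ubt_def)
    ultimately show ?thesis using a by simp
  next
    assume "phi l j = ({4*l}, 1)" "j = l + 1"
    then show ?thesis by (simp add: ubt_def)
  next
    assume a: "phi l j = ({4*l-1, 4*l+1}, 1)" "j = l + 2"
    have "odd (4 * l - 1)" "4 * l - 1 < 4 * l" using l2 by presburger+
    then have "betaR_aux (I6 l) (Suc (4 * l - 1)) {4*l-1, 4*l+1} \<le> 1" by (rule oz_upper)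
    then show ?thesis using a by (simp add: ubt_def)
  qed
  then show ?thesis using j3 by (simp only: n[symmetric] Ftop_nth)
qed

lemma ubt_sum_aux:
  "3 \<le> m \<Longrightarrow> m \<le> l + 1 \<Longrightarrow> (\<Sum>j<m. snd (phi l j) * ubt l j) = 3 * real m - 9 / 2"
proof (induction m)
  case 0 then show ?case by simp
next
  case (Suc m)
  show ?case
  proof (cases "m < 3")
    case True
    then have "Suc m = 3" using Suc.prems by simp
    moreover have "(\<Sum>j<3. snd (phi l j) * ubt l j) = 9 / 2" using Suc.prems
      by (simp add: numeral_3_eq_3 phi_def ubt_def)
    ultimately show ?thesis by simp
  next
    case False
    then have "(\<Sum>j<m. snd (phi l j) * ubt l j) = 3 * real m - 9 / 2" using Suc by simp
    moreover have "snd (phi l m) * ubt l m = 3" using False Suc.prems by (simp add: phi_def ubt_def)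
    ultimately show ?thesis by simp
  qed
qed

lemma ubt_sum:
  assumes l2: "2 \<le> l"
  shows "(\<Sum>j<l + 3. snd (phi l j) * ubt l j) = 3 * real l + 1 / 2"
proof -
  have "(\<Sum>j<l + 3. snd (phi l j) * ubt l j) = (\<Sum>j<l + 1. snd (phi l j) * ubt l j) + snd (phi l (l+1)) * ubt l (l+1) + snd (phi l (l+2)) * ubt l (l+2)"
    by (simp add: numeral_3_eq_3)
  also have "\<dots> = 3 * real (l + 1) - 9 / 2 + 1 + 1"
    using ubt_sum_aux[of "l + 1" l] l2 by (simp add: phi_def ubt_def)
  finally show ?thesis by simp
qed

lemma upper_l2:
  assumes l2: "2 \<le> l"
  shows "betaR (I6 l) {1..4 * l + 1} \<le> 3 * real l + 1 / 2"
proof -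
  have c: "card {1..4 * l + 1} = Suc (4 * l)" by simp
  have "betaR_aux (I6 l) (Suc (4 * l)) {1..4 * l + 1} \<le> 3 * real l + 1 / 2"
  proof (rule betaR_upper[OF _ _ Ftop_valid[OF l2]])
    show "2 \<le> card {1..4 * l + 1}" using l2 by simp
    fix i
    have "sumi (I6 l) (4 * l) (Ftop l) i \<le> (\<Sum>j<length (Ftop l). if fst (Ftop l ! j) \<subseteq> I6 l i then 0 else snd (Ftop l ! j) * ubt l j)"
      by (rule sumi_le[OF Ftop_valid[OF l2] Ftop_ub[OF l2]])
    also have "\<dots> \<le> (\<Sum>j<length (Ftop l). snd (Ftop l ! j) * ubt l j)"
    proof (intro sum_mono)
      fix j assume "j \<in> {..<length (Ftop l)}"
      then have "0 \<le> snd (Ftop l ! j) * ubt l j" by (simp add: Ftop_len Ftop_nth phi_nn ubt_def)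
      then show "(if fst (Ftop l ! j) \<subseteq> I6 l i then 0 else snd (Ftop l ! j) * ubt l j) \<le> snd (Ftop l ! j) * ubt l j"
        by simp
    qed
    also have "\<dots> = (\<Sum>j<l + 3. snd (phi l j) * ubt l j)"
      by (simp add: Ftop_len Ftop_nth)
    also have "\<dots> = 3 * real l + 1 / 2" by (rule ubt_sum[OF l2])
    finally show "sumi (I6 l) (4 * l) (Ftop l) i \<le> 3 * real l + 1 / 2" .
  qed simp
  then show ?thesis unfolding betaR_def c .
qed


lemma I6_1: "I6 1 1 = {4, 5}" "I6 1 2 = {1}" "I6 1 3 = {2, 5}" "I6 1 4 = {3}" "I6 1 5 = {1, 3}"
proof -
  have "I6 1 1 = {y. even y \<and> 0 < y \<and> y \<le> 4 * 1 \<and> y \<noteq> 1 + 1} \<union> {4 * 1 + 1}" by (rule I6_odd) auto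
  also have "\<dots> = {4, 5}" by (auto; presburger)
  finally show "I6 1 1 = {4, 5}" .
  show "I6 1 2 = {1}" by (simp add: I6_even)
  have "I6 1 3 = {y. even y \<and> 0 < y \<and> y \<le> 4 * 1 \<and> y \<noteq> 3 + 1} \<union> {4 * 1 + 1}" by (rule I6_odd) auto
  also have "\<dots> = {2, 5}" by (auto; presburger)
  finally show "I6 1 3 = {2, 5}" .
  show "I6 1 4 = {3}" by (simp add: I6_even)
  have "I6 1 (4 * 1 + 1) = {y. odd y \<and> y < 4 * 1}" by (rule I6_z)
  also have "\<dots> = {1, 3}" by (auto; presburger)
  finally show "I6 1 5 = {1, 3}" by simp
qed

lemma I6_1': "I6 (Suc 0) (Suc 0) = {4, 5}" "I6 (Suc 0) 2 = {Suc 0}" "I6 (Suc 0) 3 = {2, 5}" "I6 (Suc 0) 4 = {3}" "I6 (Suc 0) 5 = {Suc 0, 3}"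
  using I6_1 by simp_all

lemma sub5: assumes "A \<subseteq> {1..5::nat}" "card A \<le> 2" shows "A \<subset> {1..5}"
proof -
  have "A \<noteq> {1..5}"
  proof
    assume "A = {1..5}" then have "card A = 5" by simp
    then show False using assms(2) by simp
  qed
  then show ?thesis using assms(1) by blast
qed

definition Fone :: "(nat set \<times> real) list" where
  "Fone = [({1}, 1/2), ({2}, 1), ({3}, 1/2), ({4}, 1), ({1, 5}, 1/2), ({3, 5}, 1/2)]"

lemma lt6: "{..<6::nat} = {0, 1, 2, 3, 4, 5}" by auto

lemma Fone_valid: "validF {1..5} Fone"
  unfolding validF_def
proof (intro conjI allI impI ballI)
  fix j assume "j < length Fone"
  then have "j \<in> {..<6}" by (simp add: Fone_def)
  then have "j = 0 \<or> j = 1 \<or> j = 2 \<or> j = 3 \<or> j = 4 \<or> j = 5" unfolding lt6 by blast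
  then have h: "fst (Fone ! j) \<subseteq> {1..5} \<and> card (fst (Fone ! j)) \<le> 2 \<and> fst (Fone ! j) \<noteq> {} \<and> 0 \<le> snd (Fone ! j) \<and> snd (Fone ! j) \<le> 1"
    by (elim disjE) (simp_all add: Fone_def)
  then show "fst (Fone ! j) \<noteq> {}" "fst (Fone ! j) \<subset> {1..5}" "0 \<le> snd (Fone ! j)" "snd (Fone ! j) \<le> 1"
    using sub5 by auto
next
  fix i :: nat assume i: "i \<in> {1..5}"
  have "(\<Sum>j | j < length Fone \<and> i \<in> fst (Fone ! j). snd (Fone ! j)) = (\<Sum>j\<in>{..<6}. if i \<in> fst (Fone ! j) then snd (Fone ! j) else 0)"
  proof -
    have "{j. j < length Fone \<and> i \<in> fst (Fone ! j)} = {j \<in> {..<6}. i \<in> fst (Fone ! j)}" by (auto simp: Fone_def)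
    then show ?thesis by (simp only:) (rule sum.inter_filter, simp)
  qed
  also have "\<dots> \<ge> 1"
  proof -
    have "i = 1 \<or> i = 2 \<or> i = 3 \<or> i = 4 \<or> i = 5" using i by auto
    then show ?thesis unfolding lt6 by (auto simp: Fone_def)
  qed
  finally show "1 \<le> (\<Sum>j | j < length Fone \<and> i \<in> fst (Fone ! j). snd (Fone ! j))" .
qed

lemma upper_l1: "betaR (I6 1) {1..4 * 1 + 1} \<le> 3 * real 1 + 1 / 2"
proof -
  have c: "card {1..4 * 1 + 1::nat} = Suc 4" by simp
  have ub: "betaR_aux (I6 1) 4 (fst (Fone ! j)) \<le> 1" if "j < length Fone" for j
  proof -
    have "j \<in> {..<6}" using that by (simp add: Fone_def)
    then have "j = 0 \<or> j = 1 \<or> j = 2 \<or> j = 3 \<or> j = 4 \<or> j = 5" unfolding lt6 by blast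
    moreover have "betaR_aux (I6 1) (Suc 3) {1, 4 * 1 + 1} \<le> 1" by (rule oz_upper) auto
    moreover have "betaR_aux (I6 1) (Suc 3) {3, 4 * 1 + 1} \<le> 1" by (rule oz_upper) auto
    ultimately show ?thesis by (auto simp: Fone_def numeral_eq_Suc)
  qed
  have "betaR_aux (I6 1) (Suc 4) {1..5} \<le> 3 * real 1 + 1 / 2"
  proof (rule betaR_upper[OF _ _ Fone_valid])
    fix i :: nat assume i: "i \<in> {1..5}"
    have "sumi (I6 1) 4 Fone i \<le> (\<Sum>j<length Fone. if fst (Fone ! j) \<subseteq> I6 1 i then 0 else snd (Fone ! j) * 1)"
      by (rule sumi_le[OF Fone_valid ub])
    also have "\<dots> \<le> 3 * real 1 + 1 / 2"
    proof -
      have "i = 1 \<or> i = 2 \<or> i = 3 \<or> i = 4 \<or> i = 5" using i by auto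
      moreover have "length Fone = 6" by (simp add: Fone_def)
      ultimately show ?thesis unfolding lt6 by (elim disjE) (simp_all add: Fone_def I6_1 I6_1')
    qed
    finally show "sumi (I6 1) 4 Fone i \<le> 3 * real 1 + 1 / 2" .
  qed simp_all
  then show ?thesis unfolding betaR_def c by simp
qed


lemma mcm_fin:
  assumes "finite L"
  shows "finite {card E | E. E \<subseteq> {(r, c). r < length G \<and> c \<in> L \<and> c \<in> G ! r} \<and> inj_on fst E \<and> inj_on snd E}"
    (is "finite ?S")
proof -
  have "?S = card ` {E. E \<subseteq> {(r, c). r < length G \<and> c \<in> L \<and> c \<in> G ! r} \<and> inj_on fst E \<and> inj_on snd E}"
    by blast
  moreover have "{E. E \<subseteq> {(r, c). r < length G \<and> c \<in> L \<and> c \<in> G ! r} \<and> inj_on fst E \<and> inj_on snd E} \<subseteq> Pow ({..<length G} \<times> L)"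
    by auto
  moreover have "finite (Pow ({..<length G} \<times> L))" using assms by simp
  ultimately show ?thesis by (metis (no_types, lifting) finite_imageI finite_subset)
qed

lemma mcm_ne:
  "{card E | E. E \<subseteq> {(r, c). r < length G \<and> c \<in> L \<and> c \<in> G ! r} \<and> inj_on fst E \<and> inj_on snd E} \<noteq> {}"
proof -
  have "card ({}::(nat \<times> nat) set) \<in> {card E | E. E \<subseteq> {(r, c). r < length G \<and> c \<in> L \<and> c \<in> G ! r} \<and> inj_on fst E \<and> inj_on snd E}"
    by (intro CollectI exI[of _ "{}"]) simp
  then show ?thesis by blast
qed

lemma mcm_le_len:
  assumes "finite L" shows "mcm G L \<le> length G"
  unfolding mcm_def
proof (subst Max_le_iff[OF mcm_fin[OF assms]])
  show "{card E | E. E \<subseteq> {(r, c). r < length G \<and> c \<in> L \<and> c \<in> G ! r} \<and> inj_on fst E \<and> inj_on snd E} \<noteq> {}"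
    by (rule mcm_ne)
  show "\<forall>a\<in>{card E | E. E \<subseteq> {(r, c). r < length G \<and> c \<in> L \<and> c \<in> G ! r} \<and> inj_on fst E \<and> inj_on snd E}. a \<le> length G"
  proof
    fix a assume "a \<in> {card E | E. E \<subseteq> {(r, c). r < length G \<and> c \<in> L \<and> c \<in> G ! r} \<and> inj_on fst E \<and> inj_on snd E}"
    then obtain E where E: "a = card E" "E \<subseteq> {(r, c). r < length G \<and> c \<in> L \<and> c \<in> G ! r}" "inj_on fst E" by blast
    have "card E = card (fst ` E)" using E(3) by (simp add: card_image)
    also have "\<dots> \<le> card {..<length G}" using E(2) by (intro card_mono) auto
    finally show "a \<le> length G" using E(1) by simp
  qed
qed

lemma mcm_le_card:
  assumes "finite L" shows "mcm G L \<le> card L"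
  unfolding mcm_def
proof (subst Max_le_iff[OF mcm_fin[OF assms]])
  show "{card E | E. E \<subseteq> {(r, c). r < length G \<and> c \<in> L \<and> c \<in> G ! r} \<and> inj_on fst E \<and> inj_on snd E} \<noteq> {}"
    by (rule mcm_ne)
  show "\<forall>a\<in>{card E | E. E \<subseteq> {(r, c). r < length G \<and> c \<in> L \<and> c \<in> G ! r} \<and> inj_on fst E \<and> inj_on snd E}. a \<le> card L"
  proof
    fix a assume "a \<in> {card E | E. E \<subseteq> {(r, c). r < length G \<and> c \<in> L \<and> c \<in> G ! r} \<and> inj_on fst E \<and> inj_on snd E}"
    then obtain E where E: "a = card E" "E \<subseteq> {(r, c). r < length G \<and> c \<in> L \<and> c \<in> G ! r}" "inj_on snd E" by blast
    have "card E = card (snd ` E)" using E(3) by (simp add: card_image)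
    also have "\<dots> \<le> card L" using E(2) assms by (intro card_mono) auto
    finally show "a \<le> card L" using E(1) by simp
  qed
qed

lemma mcm_match:
  assumes fin: "finite L" and k: "k \<le> length G" and inj: "inj_on f {..<k}"
    and f: "\<And>r. r < k \<Longrightarrow> f r \<in> L \<and> f r \<in> G ! r"
  shows "k \<le> mcm G L"
proof -
  define E where "E = (\<lambda>r. (r, f r)) ` {..<k}"
  have cE: "card E = k" unfolding E_def by (subst card_image) (auto simp: inj_on_def)
  have sub: "E \<subseteq> {(r, c). r < length G \<and> c \<in> L \<and> c \<in> G ! r}" using f k by (auto simp: E_def)
  have i1: "inj_on fst E" by (auto simp: E_def inj_on_def)
  have i2: "inj_on snd E" using inj by (auto simp: E_def inj_on_def)
  have "card E \<in> {card E | E. E \<subseteq> {(r, c). r < length G \<and> c \<in> L \<and> c \<in> G ! r} \<and> inj_on fst E \<and> inj_on snd E}"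
    using sub i1 i2 by blast
  then have "card E \<le> mcm G L" unfolding mcm_def by (rule Max_ge[OF mcm_fin[OF fin]])
  then show ?thesis using cE by simp
qed

lemma mcm_unused:
  assumes "\<And>r. r < length G \<Longrightarrow> i \<notin> G ! r"
  shows "mcm G (insert i L) = mcm G L"
proof -
  have "{(r, c). r < length G \<and> c \<in> insert i L \<and> c \<in> G ! r} = {(r, c). r < length G \<and> c \<in> L \<and> c \<in> G ! r}"
    using assms by auto
  then show ?thesis unfolding mcm_def by simp
qed


definition rw :: "nat \<Rightarrow> nat set" where "rw k = insert (2 * k) {2 * k - 1}"
definition inv1 :: "nat \<Rightarrow> nat list \<Rightarrow> bool" where "inv1 l ks \<longleftrightarrow> distinct ks \<and> set ks \<subseteq> {1..2 * l}"

lemma I6_z': "I6 l (Suc (4 * l)) = {y. odd y \<and> y < 4 * l}"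
  using I6_z[of l] by simp

lemma B_mem: "c \<in> B_set (4 * l + 1) (I6 l) i \<longleftrightarrow> c \<in> {1..4 * l + 1} \<and> c \<notin> I6 l i \<and> c \<noteq> i"
  unfolding B_set_def by auto

lemma B_fin[simp]: "finite (B_set m A i)"
  by (simp add: B_set_def)

lemma B_card:
  assumes io: "odd i" and iU: "i \<in> {1..4 * l + 1}"
  shows "card (B_set (4 * l + 1) (I6 l) i) \<le> 2 * l"
proof -
  define g where "g k = (if i = 4 * l + 1 then 2 * k else if 2 * k - 1 = i then 2 * k else 2 * k - 1)" for k
  have sub: "B_set (4 * l + 1) (I6 l) i \<subseteq> g ` {1..2 * l}"
  proof
    fix c assume "c \<in> B_set (4 * l + 1) (I6 l) i"
    then have c0: "c \<in> {1..4 * l + 1} \<and> c \<notin> I6 l i \<and> c \<noteq> i" by (subst (asm) B_mem) assumption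
    then have c: "c \<in> {1..4 * l + 1}" "c \<notin> I6 l i" "c \<noteq> i" by blast+
    show "c \<in> g ` {1..2 * l}"
    proof (cases "i = 4 * l + 1")
      case True
      have nodd: "\<not> (odd c \<and> c < 4 * l)" using c(2) True by (simp add: I6_z')
      have "c \<noteq> 4 * l + 1" using c(3) True by simp
      moreover have "c \<le> 4 * l + 1" using c(1) by simp
      ultimately have ec: "even c" using nodd by presburger
      have "c = g (c div 2)" using ec True by (simp add: g_def)
      moreover have c1: "1 \<le> c" "c \<le> 4 * l + 1" using c(1) by auto
      moreover have "1 \<le> c div 2" using ec c1 by presburger
      moreover have "c div 2 \<le> 2 * l" using c1 by presburger
      ultimately have "c = g (c div 2)" "c div 2 \<in> {1..2 * l}" by auto
      then show ?thesis by blast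
    next
      case False
      have Ai: "I6 l i = {y. even y \<and> 0 < y \<and> y \<le> 4 * l \<and> y \<noteq> i + 1} \<union> {4 * l + 1}"
        by (rule I6_odd[OF io False])
      show ?thesis
      proof (cases "even c")
        case True
        have "c \<noteq> 4 * l + 1" using True by presburger
        then have "c \<le> 4 * l" "0 < c" using c(1) by auto
        then have ci: "c = i + 1" using c(2) True Ai by auto
        have "i < 4 * l + 1" using iU False by auto
        then have "1 \<le> (i + 1) div 2" "(i + 1) div 2 \<le> 2 * l" using io by presburger+
        moreover have k: "2 * ((i + 1) div 2) = i + 1" using io by presburger
        then have "g ((i + 1) div 2) = c" using ci False by (simp add: g_def)
        ultimately show ?thesis by force
      next
        case cO: False
        have "c \<noteq> 4 * l + 1" using c(2) Ai by auto
        then have "c \<le> 4 * l" using c(1) by auto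
        then have "1 \<le> (c + 1) div 2" "(c + 1) div 2 \<le> 2 * l" using cO by presburger+
        moreover have k: "2 * ((c + 1) div 2) = c + 1" using cO by presburger
        then have "g ((c + 1) div 2) = c" using c(3) False by (simp add: g_def)
        ultimately show ?thesis by force
      qed
    qed
  qed
  have "card (B_set (4 * l + 1) (I6 l) i) \<le> card (g ` {1..2 * l})" by (rule card_mono[OF _ sub]) simp
  also have "\<dots> \<le> card {1..2 * l}" by (rule card_image_le) simp
  finally show ?thesis by simp
qed

lemma K0:
  assumes inv: "inv1 l ks" and fin: "finite L" and len: "length ks + e \<le> length G"
    and rows: "\<And>r. r < length ks \<Longrightarrow> G ! r = rw (ks ! r)"
    and e: "e \<le> 1"
    and hinj: "inj_on h {1..2 * l}" and hmem: "\<And>k. k \<in> {1..2 * l} \<Longrightarrow> h k \<in> L \<and> h k \<in> rw k"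
    and cmem: "e = 1 \<Longrightarrow> c \<in> L \<and> c \<in> G ! length ks \<and> c \<notin> h ` {1..2 * l}"
  shows "length ks + e \<le> mcm G L"
proof (rule mcm_match[OF fin len])
  let ?f = "\<lambda>r. if r < length ks then h (ks ! r) else c"
  have ksr: "\<And>r. r < length ks \<Longrightarrow> ks ! r \<in> {1..2 * l}" using inv nth_mem unfolding inv1_def by blast
  have d: "distinct ks" using inv by (simp add: inv1_def)
  show "inj_on ?f {..<length ks + e}"
  proof (rule inj_onI)
    fix r1 r2 assume r1: "r1 \<in> {..<length ks + e}" and r2: "r2 \<in> {..<length ks + e}" and eq: "?f r1 = ?f r2"
    show "r1 = r2"
    proof (cases "r1 < length ks")
      case T1: True
      show ?thesis
      proof (cases "r2 < length ks")
        case True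
        then have "h (ks ! r1) = h (ks ! r2)" using eq T1 by simp
        then have "ks ! r1 = ks ! r2" using hinj ksr[OF T1] ksr[OF True] by (auto dest: inj_onD)
        then show ?thesis using nth_eq_iff_index_eq[OF d T1 True] by simp
      next
        case False
        then have "e = 1" "c = h (ks ! r1)" using r2 e eq T1 by auto
        then show ?thesis using cmem ksr[OF T1] by blast
      qed
    next
      case F1: False
      show ?thesis
      proof (cases "r2 < length ks")
        case True
        then have "e = 1" "c = h (ks ! r2)" using r1 F1 e eq by auto
        then show ?thesis using cmem ksr[OF True] by blast
      next
        case False
        then show ?thesis using F1 r1 r2 e by auto
      qed
    qed
  qed
  fix r assume r: "r < length ks + e"
  show "?f r \<in> L \<and> ?f r \<in> G ! r"
  proof (cases "r < length ks")
    case True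
    then show ?thesis using hmem[OF ksr[OF True]] rows[OF True] by simp
  next
    case False
    then have "e = 1" "r = length ks" using r e by auto
    then show ?thesis using cmem by simp
  qed
qed


lemma inv1_len: "inv1 l ks \<Longrightarrow> length ks \<le> 2 * l"
proof -
  assume "inv1 l ks"
  then have "distinct ks" "set ks \<subseteq> {1..2 * l}" by (auto simp: inv1_def)
  then have "card (set ks) \<le> card {1..2 * l}" by (intro card_mono) auto
  then show ?thesis using \<open>distinct ks\<close> by (simp add: distinct_card)
qed

lemma hB:
  assumes io: "odd i" and iU: "i \<in> {1..4 * l + 1}" and k: "k \<in> {1..2 * l}"
  shows "i = 4 * l + 1 \<Longrightarrow> 2 * k \<in> B_set (4 * l + 1) (I6 l) i"
    and "i \<noteq> 4 * l + 1 \<Longrightarrow> 2 * k - 1 \<noteq> i \<Longrightarrow> 2 * k - 1 \<in> B_set (4 * l + 1) (I6 l) i"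
    and "i \<noteq> 4 * l + 1 \<Longrightarrow> 2 * k - 1 = i \<Longrightarrow> 2 * k \<in> B_set (4 * l + 1) (I6 l) i"
proof -
  have k1: "1 \<le> k" "k \<le> 2 * l" using k by auto
  {
    assume z: "i = 4 * l + 1"
    have "2 * k \<in> {1..4 * l + 1}" using k1 by auto
    moreover have "2 * k \<notin> I6 l i" using z by (simp add: I6_z I6_z')
    moreover have "2 * k \<noteq> i" using io by presburger
    ultimately show "2 * k \<in> B_set (4 * l + 1) (I6 l) i" by (simp only: B_mem) blast
  }
  {
    assume z: "i \<noteq> 4 * l + 1" and ne: "2 * k - 1 \<noteq> i"
    have Ai: "I6 l i = {y. even y \<and> 0 < y \<and> y \<le> 4 * l \<and> y \<noteq> i + 1} \<union> {4 * l + 1}" by (rule I6_odd[OF io z])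
    have "2 * k - 1 \<in> {1..4 * l + 1}" using k1 by auto
    moreover have "2 * k - 1 \<notin> I6 l i"
    proof -
      have "odd (2 * k - 1)" "2 * k - 1 \<noteq> 4 * l + 1" using k1 by presburger+
      then show ?thesis using Ai by auto
    qed
    ultimately show "2 * k - 1 \<in> B_set (4 * l + 1) (I6 l) i" using ne by (simp only: B_mem) blast
  }
  {
    assume z: "i \<noteq> 4 * l + 1" and e: "2 * k - 1 = i"
    have Ai: "I6 l i = {y. even y \<and> 0 < y \<and> y \<le> 4 * l \<and> y \<noteq> i + 1} \<union> {4 * l + 1}" by (rule I6_odd[OF io z])
    have "2 * k \<in> {1..4 * l + 1}" using k1 by auto
    moreover have "2 * k \<notin> I6 l i"
    proof -
      have "2 * k = i + 1" "2 * k \<noteq> 4 * l + 1" using e k1 by presburger+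
      then show ?thesis using Ai by auto
    qed
    moreover have "2 * k \<noteq> i" using io by presburger
    ultimately show "2 * k \<in> B_set (4 * l + 1) (I6 l) i" by (simp only: B_mem) blast
  }
qed

lemma K1:
  assumes inv: "inv1 l ks" and io: "odd i" and iU: "i \<in> {1..4 * l + 1}"
    and len: "length ks \<le> length G" and rows: "\<And>r. r < length ks \<Longrightarrow> G ! r = rw (ks ! r)"
  shows "length ks \<le> mcm G (B_set (4 * l + 1) (I6 l) i)"
proof -
  define h where "h k = (if i = 4 * l + 1 then 2 * k else if 2 * k - 1 = i then 2 * k else 2 * k - 1)" for k
  have hinj: "inj_on h {1..2 * l}"
  proof (rule inj_onI)
    fix k1 k2 assume "k1 \<in> {1..2 * l}" "k2 \<in> {1..2 * l}" "h k1 = h k2"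
    then show "k1 = k2" unfolding h_def by (auto split: if_splits; presburger)
  qed
  have hmem: "h k \<in> B_set (4 * l + 1) (I6 l) i \<and> h k \<in> rw k" if k: "k \<in> {1..2 * l}" for k
  proof (cases "i = 4 * l + 1")
    case True
    then show ?thesis using hB(1)[OF io iU k] by (simp add: h_def rw_def)
  next
    case False
    show ?thesis
    proof (cases "2 * k - 1 = i")
      case True
      then show ?thesis using hB(3)[OF io iU k False] False by (simp add: h_def rw_def)
    next
      case F2: False
      then show ?thesis using hB(2)[OF io iU k False] False by (simp add: h_def rw_def)
    qed
  qed
  have "length ks + 0 \<le> mcm G (B_set (4 * l + 1) (I6 l) i)"
    by (rule K0[OF inv B_fin _ rows _ hinj hmem, where c = 0]) (use len in auto)
  then show ?thesis by simp
qed

lemma rows_map: "r < length ks \<Longrightarrow> (map rw ks @ X) ! r = rw (ks ! r)"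
  by (simp add: nth_append)

lemma K2:
  assumes inv: "inv1 l ks" and iU: "i \<in> {1..4 * l + 1}" and iE: "i \<notin> (\<lambda>k. 2 * k) ` set ks"
  shows "mcm (map rw ks) ({i} \<union> B_set (4 * l + 1) (I6 l) i) \<noteq> mcm (map rw ks) (B_set (4 * l + 1) (I6 l) i) + 1"
proof (cases "even i")
  case True
  have "i \<notin> map rw ks ! r" if r: "r < length (map rw ks)" for r
  proof
    assume "i \<in> map rw ks ! r"
    then have "i = 2 * (ks ! r) \<or> i = 2 * (ks ! r) - 1" using r by (simp add: rw_def)
    moreover have "ks ! r \<in> set ks" using r by simp
    moreover have "ks ! r \<ge> 1" using inv r nth_mem unfolding inv1_def by fastforce
    ultimately show False
    proof (elim disjE)
      assume "i = 2 * ks ! r" "ks ! r \<in> set ks"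
      then have "i \<in> (\<lambda>k. 2 * k) ` set ks" by blast
      then show False using iE by blast
    next
      assume "i = 2 * ks ! r - 1" "1 \<le> ks ! r"
      then have "odd i" by presburger
      then show False using True by blast
    qed
  qed
  then have "mcm (map rw ks) (insert i (B_set (4 * l + 1) (I6 l) i)) = mcm (map rw ks) (B_set (4 * l + 1) (I6 l) i)"
    by (intro mcm_unused) auto
  then show ?thesis by simp
next
  case False
  have a: "length ks \<le> mcm (map rw ks) (B_set (4 * l + 1) (I6 l) i)"
    by (rule K1[OF inv False iU]) (auto)
  have b: "mcm (map rw ks) ({i} \<union> B_set (4 * l + 1) (I6 l) i) \<le> length (map rw ks)"
    by (rule mcm_le_len) (simp add: B_fin)
  show ?thesis using a b by simp
qed


lemma set_full: "inv1 l ks \<Longrightarrow> length ks = 2 * l \<Longrightarrow> set ks = {1..2 * l}"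
proof -
  assume inv: "inv1 l ks" and len: "length ks = 2 * l"
  then have d: "distinct ks" and s: "set ks \<subseteq> {1..2 * l}" by (auto simp: inv1_def)
  have "card (set ks) = card {1..2 * l}" using d len by (simp add: distinct_card)
  then show ?thesis using s by (intro card_subset_eq) auto
qed

lemma K3:
  assumes inv: "inv1 l ks" and len: "length ks = 2 * l" and wo: "odd w" and wU: "w \<in> {1..4 * l + 1}"
    and io: "odd i" and iU: "i \<in> {1..4 * l + 1}" and iw: "i \<noteq> w"
  shows "mcm (map rw ks @ [insert w (I6 l w)]) ({i} \<union> B_set (4 * l + 1) (I6 l) i)
       = mcm (map rw ks @ [insert w (I6 l w)]) (B_set (4 * l + 1) (I6 l) i) + 1"
proof -
  let ?G = "map rw ks @ [insert w (I6 l w)]"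
  let ?B = "B_set (4 * l + 1) (I6 l) i"
  have lenG: "length ?G = 2 * l + 1" using len by simp
  have rows: "\<And>r. r < length ks \<Longrightarrow> ?G ! r = rw (ks ! r)" by (rule rows_map)
  have last: "?G ! length ks = insert w (I6 l w)" by (simp add: nth_append)
  have a: "2 * l \<le> mcm ?G ?B" using K1[OF inv io iU _ rows] len by simp
  have b: "mcm ?G ?B \<le> 2 * l" using mcm_le_card[of ?B ?G] B_card[OF io iU] by simp
  have c: "mcm ?G ({i} \<union> ?B) \<le> 2 * l + 1" using mcm_le_len[of "{i} \<union> ?B" ?G] lenG by simp
  have iL: "i \<in> {i} \<union> ?B" by simp
  have i4: "i \<noteq> 4 * l + 1 \<Longrightarrow> i + 1 \<le> 4 * l" using iU io by auto presburger
  have d: "length ks + 1 \<le> mcm ?G ({i} \<union> ?B)"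
  proof (cases "i = 4 * l + 1")
    case True
    have wz: "w \<noteq> 4 * l + 1" using True iw by simp
    show ?thesis
    proof (rule K0[OF inv _ _ rows, where h = "\<lambda>k. 2 * k" and c = "4 * l + 1"])
      show "inj_on (\<lambda>k. 2 * k) {1..2 * l}" by (auto simp: inj_on_def)
      fix k assume k: "k \<in> {1..2 * l}"
      show "2 * k \<in> {i} \<union> ?B \<and> 2 * k \<in> rw k" using hB(1)[OF io iU k True] by (simp add: rw_def)
    next
      have "4 * l + 1 \<in> I6 l w" by (simp add: I6_odd[OF wo wz])
      moreover have "4 * l + 1 \<notin> (\<lambda>k. 2 * k) ` {1..2 * l}" by auto presburger
      ultimately show "4 * l + 1 \<in> {i} \<union> ?B \<and> 4 * l + 1 \<in> ?G ! length ks \<and> 4 * l + 1 \<notin> (\<lambda>k. 2 * k) ` {1..2 * l}"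
        using True last by simp
    qed (use lenG len in auto)
  next
    case iz: False
    show ?thesis
    proof (cases "w = 4 * l + 1")
      case True
      let ?h = "\<lambda>k. if 2 * k - 1 = i then 2 * k else 2 * k - 1"
      show ?thesis
      proof (rule K0[OF inv _ _ rows, where h = ?h and c = i])
        show "inj_on ?h {1..2 * l}"
          by (rule inj_onI) (auto split: if_splits; presburger)
        fix k assume k: "k \<in> {1..2 * l}"
        show "?h k \<in> {i} \<union> ?B \<and> ?h k \<in> rw k"
          using hB(2)[OF io iU k iz] hB(3)[OF io iU k iz] by (simp add: rw_def)
      next
        have "i \<in> I6 l (4 * l + 1)" using io i4[OF iz] by (simp add: I6_z I6_z')
        moreover have "i \<notin> ?h ` {1..2 * l}" using io by (auto; presburger)
        ultimately show "i \<in> {i} \<union> ?B \<and> i \<in> ?G ! length ks \<and> i \<notin> ?h ` {1..2 * l}"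
          using True last by simp
      qed (use lenG len in auto)
    next
      case wz: False
      show ?thesis
      proof (rule K0[OF inv _ _ rows, where h = "\<lambda>k. 2 * k - 1" and c = "i + 1"])
        show "inj_on (\<lambda>k. 2 * k - 1) {1..2 * l}" by (rule inj_onI) auto
        fix k assume k: "k \<in> {1..2 * l}"
        show "2 * k - 1 \<in> {i} \<union> ?B \<and> 2 * k - 1 \<in> rw k"
          using hB(2)[OF io iU k iz] by (cases "2 * k - 1 = i") (auto simp: rw_def)
      next
        have kk3: "2 * ((i + 1) div 2) = i + 1" using io by presburger
        have kk2: "2 * ((i + 1) div 2) - 1 = i" using kk3 by simp
        have "1 \<le> (i + 1) div 2" "(i + 1) div 2 \<le> 2 * l" using io i4[OF iz] by presburger+
        then have kk1: "(i + 1) div 2 \<in> {1..2 * l}" by simp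
        note kk = kk1 kk2 kk3
        have "i + 1 \<in> ?B" using hB(3)[OF io iU kk(1) iz kk(2)] kk(3) by simp
        moreover have "i + 1 \<in> I6 l w" using io i4[OF iz] iw wo by (simp add: I6_odd[OF wo wz])
        moreover have "i + 1 \<notin> (\<lambda>k. 2 * k - 1) ` {1..2 * l}" using io by (auto; presburger)
        ultimately show "i + 1 \<in> {i} \<union> ?B \<and> i + 1 \<in> ?G ! length ks \<and> i + 1 \<notin> (\<lambda>k. 2 * k - 1) ` {1..2 * l}"
          using last by simp
      qed (use lenG len in auto)
    qed
  qed
  show ?thesis using a b c d len by simp
qed


definition stt :: "nat \<Rightarrow> nat list \<Rightarrow> nat set \<times> nat set list" where
  "stt l ks = ({1..4 * l + 1} - (\<lambda>k. 2 * k) ` set ks, map rw ks)"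

lemma step_unfold:
  assumes "umcd_step m A (N, G) s'"
  shows "N \<noteq> {} \<and> (\<exists>w\<in>N. (\<forall>v\<in>N. card (A w) \<le> card (A v)) \<and>
     s' = (N - {w} - {i \<in> N - {w}. mcm (G @ [insert w (A w)]) ({i} \<union> B_set m A i) = mcm (G @ [insert w (A w)]) (B_set m A i) + 1},
           G @ [insert w (A w)]))"
  using assms unfolding umcd_step_def Let_def by blast

lemma step_ex:
  assumes "finite N" "N \<noteq> {}"
  shows "\<exists>s'. umcd_step m A (N, G) s'"
proof -
  have fK: "finite ((\<lambda>v. card (A v)) ` N)" "(\<lambda>v. card (A v)) ` N \<noteq> {}" using assms by auto
  obtain w where w: "w \<in> N" "card (A w) = Min ((\<lambda>v. card (A v)) ` N)"
    using Min_in[OF fK] by auto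
  have min: "\<forall>v\<in>N. card (A w) \<le> card (A v)" using w fK by simp
  show ?thesis unfolding umcd_step_def Let_def using w(1) min assms(2) by blast
qed

lemma I6_fin: "finite (I6 l x)"
proof (cases "even x")
  case True then show ?thesis by (simp add: I6_even)
next
  case False
  show ?thesis
  proof (cases "x = 4 * l + 1")
    case True
    have "{y. odd y \<and> y < 4 * l} \<subseteq> {..<4 * l}" by auto
    then have "finite {y. odd y \<and> y < 4 * l}" using finite_subset by blast
    then show ?thesis using True by (simp add: I6_z')
  next
    case F: False
    have "{y. even y \<and> 0 < y \<and> y \<le> 4 * l \<and> y \<noteq> x + 1} \<subseteq> {..4 * l}" by auto
    then show ?thesis using I6_odd[OF False F] by (simp add: finite_subset)
  qed
qed

lemma card_odd:
  assumes l1: "1 \<le> l" and wo: "odd w" and wU: "w \<in> {1..4 * l + 1}"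
  shows "2 \<le> card (I6 l w)"
proof -
  obtain a b where ab: "a \<noteq> b" "a \<in> I6 l w" "b \<in> I6 l w"
  proof (cases "w = 4 * l + 1")
    case True
    have "1 \<in> I6 l w" "3 \<in> I6 l w" using True l1 by (simp_all add: I6_z I6_z')
    then show ?thesis using that[of 1 3] by simp
  next
    case False
    define e where "e = (if w = 1 then 4 else 2::nat)"
    have "w + 1 \<noteq> e" using wo wU by (auto simp: e_def; presburger)
    then have "e \<in> I6 l w" "4 * l + 1 \<in> I6 l w" using l1 by (auto simp: I6_odd[OF wo False] e_def)
    moreover have "e \<noteq> 4 * l + 1" by (simp add: e_def; presburger)
    ultimately show ?thesis using that by blast
  qed
  have "card {a, b} \<le> card (I6 l w)" using ab I6_fin by (intro card_mono) auto
  then show ?thesis using ab by simp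
qed

lemma step_p1:
  assumes l1: "1 \<le> l" and inv: "inv1 l ks" and lt: "length ks < 2 * l"
    and st: "umcd_step (4 * l + 1) (I6 l) (stt l ks) s'"
  shows "\<exists>k. inv1 l (ks @ [k]) \<and> s' = stt l (ks @ [k])"
proof -
  let ?U = "{1..4 * l + 1}"
  let ?N = "?U - (\<lambda>k. 2 * k) ` set ks"
  obtain w where w: "w \<in> ?N" and min: "\<forall>v\<in>?N. card (I6 l w) \<le> card (I6 l v)"
    and s': "s' = (?N - {w} - {i \<in> ?N - {w}. mcm (map rw ks @ [insert w (I6 l w)]) ({i} \<union> B_set (4 * l + 1) (I6 l) i)
                 = mcm (map rw ks @ [insert w (I6 l w)]) (B_set (4 * l + 1) (I6 l) i) + 1}, map rw ks @ [insert w (I6 l w)])"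
    using step_unfold[OF st[unfolded stt_def]] by blast
  have d: "distinct ks" and sks: "set ks \<subseteq> {1..2 * l}" using inv by (auto simp: inv1_def)
  have "card (set ks) < card {1..2 * l}" using d lt by (simp add: distinct_card)
  then have "\<not> {1..2 * l} \<subseteq> set ks" using card_mono[of "set ks" "{1..2 * l}"] by auto
  then obtain k0 where k0: "k0 \<in> {1..2 * l}" "k0 \<notin> set ks" by blast
  have "2 * k0 \<in> ?N" using k0 by auto
  then have "card (I6 l w) \<le> card (I6 l (2 * k0))" using min by blast
  also have "\<dots> = 1" by (simp add: I6_even)
  finally have cw: "card (I6 l w) \<le> 1" .
  have wU: "w \<in> ?U" using w by blast
  have we: "even w"
  proof (rule ccontr)
    assume "odd w"
    then have "2 \<le> card (I6 l w)" using card_odd[OF l1 _ wU] by blast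
    then show False using cw by simp
  qed
  define k' where "k' = w div 2"
  have wk: "w = 2 * k'" using we by (simp add: k'_def)
  have k'r: "k' \<in> {1..2 * l}" using wU wk by auto
  have k'n: "k' \<notin> set ks" using w wk by auto
  have inv': "inv1 l (ks @ [k'])" using inv k'r k'n by (auto simp: inv1_def)
  have row: "insert w (I6 l w) = rw k'" using wk by (simp add: I6_even rw_def)
  have G': "map rw ks @ [insert w (I6 l w)] = map rw (ks @ [k'])" using row by simp
  have N1: "?N - {w} = ?U - (\<lambda>k. 2 * k) ` set (ks @ [k'])" using wk by auto
  have empty: "{i \<in> ?N - {w}. mcm (map rw (ks @ [k'])) ({i} \<union> B_set (4 * l + 1) (I6 l) i)
                 = mcm (map rw (ks @ [k'])) (B_set (4 * l + 1) (I6 l) i) + 1} = {}"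
  proof -
    have "\<not> (mcm (map rw (ks @ [k'])) ({i} \<union> B_set (4 * l + 1) (I6 l) i)
                 = mcm (map rw (ks @ [k'])) (B_set (4 * l + 1) (I6 l) i) + 1)" if i: "i \<in> ?N - {w}" for i
      using K2[OF inv', of i] i N1 by blast
    then show ?thesis by blast
  qed
  have s2: "s' = (?N - {w} - {i \<in> ?N - {w}. mcm (map rw (ks @ [k'])) ({i} \<union> B_set (4 * l + 1) (I6 l) i)
                 = mcm (map rw (ks @ [k'])) (B_set (4 * l + 1) (I6 l) i) + 1}, map rw (ks @ [k']))"
    using s' unfolding G' .
  have s3: "s' = (?N - {w}, map rw (ks @ [k']))" using s2 unfolding empty by (simp only: Diff_empty)
  have "s' = stt l (ks @ [k'])" using s3 unfolding stt_def N1 .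
  then show ?thesis using inv' by blast
qed

lemma step_p2:
  assumes inv: "inv1 l ks" and len: "length ks = 2 * l"
    and st: "umcd_step (4 * l + 1) (I6 l) (stt l ks) s'"
  shows "\<exists>G. s' = ({}, G) \<and> length G = 2 * l + 1"
proof -
  let ?U = "{1..4 * l + 1}"
  let ?N = "?U - (\<lambda>k. 2 * k) ` set ks"
  obtain w where w: "w \<in> ?N"
    and s': "s' = (?N - {w} - {i \<in> ?N - {w}. mcm (map rw ks @ [insert w (I6 l w)]) ({i} \<union> B_set (4 * l + 1) (I6 l) i)
                 = mcm (map rw ks @ [insert w (I6 l w)]) (B_set (4 * l + 1) (I6 l) i) + 1}, map rw ks @ [insert w (I6 l w)])"
    using step_unfold[OF st[unfolded stt_def]] by blast
  have sk: "set ks = {1..2 * l}" by (rule set_full[OF inv len])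
  have Nodd: "x \<in> ?N \<Longrightarrow> odd x" for x
  proof -
    assume x: "x \<in> ?N"
    show "odd x"
    proof (rule ccontr)
      assume "\<not> odd x"
      then have e: "x = 2 * (x div 2)" by presburger
      have "1 \<le> x" "x \<le> 4 * l + 1" using x by auto
      then have "1 \<le> x div 2" "x div 2 \<le> 2 * l" using \<open>\<not> odd x\<close> by presburger+
      then have "x div 2 \<in> {1..2 * l}" by simp
      note e this
      then show False using x sk by blast
    qed
  qed
  have wo: "odd w" using Nodd[OF w] .
  have wU: "w \<in> ?U" using w by blast
  have all: "{i \<in> ?N - {w}. mcm (map rw ks @ [insert w (I6 l w)]) ({i} \<union> B_set (4 * l + 1) (I6 l) i)
                 = mcm (map rw ks @ [insert w (I6 l w)]) (B_set (4 * l + 1) (I6 l) i) + 1} = ?N - {w}"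
  proof -
    have "mcm (map rw ks @ [insert w (I6 l w)]) ({i} \<union> B_set (4 * l + 1) (I6 l) i)
                 = mcm (map rw ks @ [insert w (I6 l w)]) (B_set (4 * l + 1) (I6 l) i) + 1" if i: "i \<in> ?N - {w}" for i
      using K3[OF inv len wo wU Nodd, of i] i by blast
    then show ?thesis by blast
  qed
  show ?thesis using s' all len by simp
qed


definition Inv :: "nat \<Rightarrow> nat set \<times> nat set list \<Rightarrow> bool" where
  "Inv l s \<longleftrightarrow> (\<exists>ks. inv1 l ks \<and> s = stt l ks) \<or> (\<exists>G. s = ({}, G) \<and> length G = 2 * l + 1)"

lemma Inv_step:
  assumes l1: "1 \<le> l" and I: "Inv l s" and st: "umcd_step (4 * l + 1) (I6 l) s s'"
  shows "Inv l s'"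
  using I unfolding Inv_def
proof (elim disjE exE conjE)
  fix ks assume inv: "inv1 l ks" and s: "s = stt l ks"
  have "length ks \<le> 2 * l" by (rule inv1_len[OF inv])
  then consider "length ks < 2 * l" | "length ks = 2 * l" by linarith
  then show "(\<exists>ks. inv1 l ks \<and> s' = stt l ks) \<or> (\<exists>G. s' = ({}, G) \<and> length G = 2 * l + 1)"
  proof cases
    case 1
    then show ?thesis using step_p1[OF l1 inv 1 st[unfolded s]] by blast
  next
    case 2
    then show ?thesis using step_p2[OF inv 2 st[unfolded s]] by blast
  qed
next
  fix G assume "s = ({}, G)"
  then show "(\<exists>ks. inv1 l ks \<and> s' = stt l ks) \<or> (\<exists>G. s' = ({}, G) \<and> length G = 2 * l + 1)"
    using step_unfold[of "4 * l + 1" "I6 l" "{}" G s'] st by simp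
qed

lemma runs_len:
  assumes l1: "1 \<le> l" and r: "umcd_run (4 * l + 1) (I6 l) G"
  shows "length G = 2 * l + 1"
proof -
  have init: "({1..4 * l + 1}, []) = stt l []" by (simp add: stt_def)
  have "Inv l ({1..4 * l + 1}, [])" unfolding Inv_def init by (intro disjI1 exI[of _ "[]"]) (simp add: inv1_def)
  have "Inv l ({}, G)"
    using r[unfolded umcd_run_def]
  proof (induction rule: rtranclp_induct)
    case base
    then show ?case using \<open>Inv l ({1..4 * l + 1}, [])\<close> .
  next
    case (step y z)
    then show ?case using Inv_step[OF l1 step.IH step.hyps(2)] by simp
  qed
  then show ?thesis unfolding Inv_def
  proof (elim disjE exE conjE)
    fix ks assume "({}, G) = stt l ks"
    then have "{1..4 * l + 1} - (\<lambda>k. 2 * k) ` set ks = {}" by (simp add: stt_def)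
    moreover have "1 \<in> {1..4 * l + 1} - (\<lambda>k. 2 * k) ` set ks" by (auto; presburger)
    ultimately show ?thesis by blast
  qed simp
qed

lemma run_exists:
  assumes l1: "1 \<le> l"
  shows "\<exists>G. umcd_run (4 * l + 1) (I6 l) G"
proof -
  have main: "\<forall>ks. inv1 l ks \<longrightarrow> 2 * l - length ks = d \<longrightarrow> (\<exists>G. (umcd_step (4 * l + 1) (I6 l))\<^sup>*\<^sup>* (stt l ks) ({}, G))" for d
  proof (induction d)
    case 0
    show ?case
    proof (intro allI impI)
      fix ks assume inv: "inv1 l ks" and d: "2 * l - length ks = 0"
      have len: "length ks = 2 * l" using d inv1_len[OF inv] by simp
      have ne: "1 \<in> {1..4 * l + 1} - (\<lambda>k. 2 * k) ` set ks" by (auto; presburger)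
      obtain s' where st: "umcd_step (4 * l + 1) (I6 l) (stt l ks) s'"
        using step_ex[of "{1..4 * l + 1} - (\<lambda>k. 2 * k) ` set ks" "4 * l + 1" "I6 l" "map rw ks"] ne
        unfolding stt_def by blast
      obtain G where "s' = ({}, G)" using step_p2[OF inv len st] by blast
      then show "\<exists>G. (umcd_step (4 * l + 1) (I6 l))\<^sup>*\<^sup>* (stt l ks) ({}, G)" using st by blast
    qed
  next
    case (Suc d)
    show ?case
    proof (intro allI impI)
      fix ks assume inv: "inv1 l ks" and d: "2 * l - length ks = Suc d"
      have lt: "length ks < 2 * l" using d by simp
      have ne: "1 \<in> {1..4 * l + 1} - (\<lambda>k. 2 * k) ` set ks" by (auto; presburger)
      obtain s' where st: "umcd_step (4 * l + 1) (I6 l) (stt l ks) s'"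
        using step_ex[of "{1..4 * l + 1} - (\<lambda>k. 2 * k) ` set ks" "4 * l + 1" "I6 l" "map rw ks"] ne
        unfolding stt_def by blast
      obtain k where k: "inv1 l (ks @ [k])" "s' = stt l (ks @ [k])" using step_p1[OF l1 inv lt st] by blast
      have "2 * l - length (ks @ [k]) = d" using d by simp
      then obtain G where "(umcd_step (4 * l + 1) (I6 l))\<^sup>*\<^sup>* (stt l (ks @ [k])) ({}, G)" using Suc.IH k(1) by blast
      then show "\<exists>G. (umcd_step (4 * l + 1) (I6 l))\<^sup>*\<^sup>* (stt l ks) ({}, G)"
        using st k(2) by (meson converse_rtranclp_into_rtranclp)
    qed
  qed
  have init: "({1..4 * l + 1}, []) = stt l []" by (simp add: stt_def)
  have "inv1 l []" by (simp add: inv1_def)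
  then obtain G where "(umcd_step (4 * l + 1) (I6 l))\<^sup>*\<^sup>* (stt l []) ({}, G)" using main by blast
  then show ?thesis unfolding umcd_run_def init by blast
qed

lemma betaR_val:
  assumes l1: "1 \<le> l"
  shows "betaR (I6 l) {1..4 * l + 1} = 3 * real l + 1 / 2"
proof (rule antisym)
  have "hT {1..4 * l + 1} \<le> betaR_aux (I6 l) (card {1..4 * l + 1}) {1..4 * l + 1}"
    by (rule hT_lower) auto
  then show "3 * real l + 1 / 2 \<le> betaR (I6 l) {1..4 * l + 1}" unfolding betaR_def hT_U .
next
  show "betaR (I6 l) {1..4 * l + 1} \<le> 3 * real l + 1 / 2"
  proof (cases "l = 1")
    case True
    show ?thesis unfolding True by (rule upper_l1)
  next
    case False
    then have "2 \<le> l" using l1 by linarith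
    then show ?thesis by (rule upper_l2)
  qed
qed

theorem theorem4:
  fixes l :: nat
  assumes "l \<ge> 1"
  shows "(\<exists>G. umcd_run (4 * l + 1) (I6 l) G) \<and>
         (\<forall>G. umcd_run (4 * l + 1) (I6 l) G \<longrightarrow>
              betaR (I6 l) {1..4 * l + 1} - real (length G) = real l - 1 / 2)"
proof
  show "\<exists>G. umcd_run (4 * l + 1) (I6 l) G" by (rule run_exists[OF assms])
  show "\<forall>G. umcd_run (4 * l + 1) (I6 l) G \<longrightarrow> betaR (I6 l) {1..4 * l + 1} - real (length G) = real l - 1 / 2"
  proof (intro allI impI)
    fix G assume "umcd_run (4 * l + 1) (I6 l) G"
    then have "length G = 2 * l + 1" by (rule runs_len[OF assms])
    then show "betaR (I6 l) {1..4 * l + 1} - real (length G) = real l - 1 / 2"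
      using betaR_val[OF assms] by simp
  qed
qed


end
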